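(* (Discrete Korn inequality for space groups.) Suppose that $\mathcal G$ is a space group and $\mathcal R\subset\mathcal G$ has Property 2. Then the seminorms $\|\cdot\|_{\mathcal R}$, $\|\cdot\|_{\mathcal R,0,0}$ and $u\mapsto\|\nabla_{\mathcal R}u\|_2$ on $U_{\mathrm{per}}$ are equivalent.
   Context: Euclidean group: $\mathrm E(n)$ consists of pairs $(A|b)$, $A\in\mathrm O(n)$, $b\in\mathbb R^n$, acting by $(A|b)\cdot x=Ax+b$, product $(A_1|b_1)(A_2|b_2)=(A_1A_2|b_1+A_1b_2)$; $\mathrm{rot}(A|b)=A$. A space group in $\mathrm E(n)$ is a discrete subgroup containing $n$ translations $(I|b)$ with linearly independent $b$'s. Standing setting: $d=d_1+d_2$; $\mathcal S<\mathrm E(d_2)$ is a space group with translation subgroup $\mathcal T_{\mathcal S}$; $A\oplus(B|b)=(\mathrm{diag}(A,B)|(0,b))$; $\mathcal G$ is a discrete subgroup of $\mathrm E(d)$ contained in $\{A\oplus s:A\in\mathrm O(d_1),s\in\mathcal S\}$ projecting onto $\mathcal S$; $\mathcal T\subset\mathcal G$ maps bijectively onto $\mathcal T_{\mathcal S}$. There is $m_0\in\mathbb N$ such that $\mathcal T^N=\{t^N:t\in\mathcal T\}$ is a normal subgroup iff $N\in\mathcal M=m_0\mathbb N$, then isomorphic to $\mathbb Z^{d_2}$ of finite index; $\mathcal C_N$ is a fixed set of representatives of $\mathcal G/\mathcal T^N$. $U_{\mathrm{per}}$: maps $u:\mathcal G\to\mathbb R^d$ that are $\mathcal T^N$-periodic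 for some $N\in\mathcal M$. $x_0\in\mathbb R^d$ with $g\mapsto g\cdot x_0$ injective; $d_{\mathrm{aff}}=\dim\mathrm{aff}(\mathcal G\cdot x_0)$; assumed $\mathcal G\cdot x_0\subset\{0_{d-d_{\mathrm{aff}}}\}\times\mathbb R^{d_{\mathrm{aff}}}$ and $\mathcal G$ acts trivially on $\mathbb R^{d-d_{\mathrm{aff}}}\times\{0\}$. For $\mathcal R\subset\mathcal G$, maps $v:\mathcal R\to\mathbb R^d$: $U_{\mathrm{iso}}(\mathcal R)$: $\exists a\in\mathbb R^d$, $S\in\mathrm{Skew}(d)$ with $\mathrm{rot}(g)v(g)=a+S(g\cdot x_0-x_0)$ on $\mathcal R$; $U_{\mathrm{iso},0,0}(\mathcal R)$: the same with $S=S_1\oplus0_{d_2\times d_2}$, $S_1\in\mathrm{Skew}(d_1)$. For finite $\mathcal R$ and $\mathcal T^N$-periodic $u$: $\|u\|_{\mathcal R}$ (resp. $\|u\|_{\mathcal R,0,0}$) $=\big(\frac1{|\mathcal C_N|}\sum_{g\in\mathcal C_N}\mathrm{dist}(u(g\,\cdot)|_{\mathcal R},U)^2\big)^{1/2}$ with $U=U_{\mathrm{iso}}(\mathcal R)$ (resp. $U_{\mathrm{iso},0,0}(\mathcal R)$); $\|\nabla_{\mathcal R}u\|_2=\big(\frac1{|\mathcal C_N|}\sum_{g\in\mathcal C_N}\sum_{h\in\mathcal R}|u(gh)-\mathrm{rot}(h)^Tu(g)|^2\big)^{1/2}$. Property 1: $\mathcal R$ finite, $\mathrm{id}\in\mathcal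 R$, $\mathrm{aff}(\mathcal R\cdot x_0)=\mathrm{aff}(\mathcal G\cdot x_0)$. Property 2: $\mathcal R$ finite, and there are $\mathcal R',\mathcal R''$ with $\mathrm{id}\in\mathcal R'$, $\mathcal R'$ generating $\mathcal G$, $\mathcal R''$ with Property 1, and $\{gh:g\in\mathcal R',h\in\mathcal R''\}\subset\mathcal R$. *)

theory Defs
  imports "HOL-Analysis.Analysis"
begin

text \<open>Elements (A|b) of the Euclidean group E(n), n = CARD('n), are pairs (A, b).\<close>
type_synonym 'n euc = "(real^'n^'n) \<times> (real^'n)"

definition eid :: "'n::finite euc" where
  "eid = (mat 1, 0)"

definition emul :: "'n::finite euc \<Rightarrow> 'n euc \<Rightarrow> 'n euc" where
  "emul g h = (fst g ** fst h, snd g + fst g *v snd h)"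

definition einv :: "'n::finite euc \<Rightarrow> 'n euc" where
  "einv g = (transpose (fst g), - (transpose (fst g) *v snd g))"

definition eact :: "'n::finite euc \<Rightarrow> real^'n \<Rightarrow> real^'n" where
  "eact g x = fst g *v x + snd g"

definition rot :: "'n::finite euc \<Rightarrow> real^'n^'n" where
  "rot g = fst g"

fun epow :: "'n::finite euc \<Rightarrow> nat \<Rightarrow> 'n euc" where
  "epow g 0 = eid"
| "epow g (Suc k) = emul g (epow g k)"

definition euc_subgroup :: "'n::finite euc set \<Rightarrow> bool" where
  "euc_subgroup G \<longleftrightarrow> (\<forall>g\<in>G. orthogonal_matrix (fst g)) \<and> eid \<in> G \<and>
     (\<forall>g\<in>G. \<forall>h\<in>G. emul g h \<in> G) \<and> (\<forall>g\<in>G. einv g \<in> G)"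

definition space_group :: "'n::finite euc set \<Rightarrow> bool" where
  "space_group G \<longleftrightarrow> euc_subgroup G \<and> discrete G \<and>
     (\<exists>B. B \<subseteq> {b. (mat 1, b) \<in> G} \<and> independent B \<and> card B = CARD('n))"

definition transl :: "'n::finite euc set \<Rightarrow> 'n euc set" where
  "transl G = {g \<in> G. fst g = mat 1}"

definition TN :: "'n::finite euc set \<Rightarrow> nat \<Rightarrow> 'n euc set" where
  "TN G N = {epow t N | t. t \<in> transl G}"

definition normal_subgroup :: "'n::finite euc set \<Rightarrow> 'n euc set \<Rightarrow> bool" where
  "normal_subgroup H G \<longleftrightarrow> H \<subseteq> G \<and> euc_subgroup H \<and>
     (\<forall>g\<in>G. \<forall>h\<in>H. emul (emul g h) (einv g) \<in> H)"

definition Mset :: "'n::finite euc set \<Rightarrow> nat set" where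
  "Mset G = {N. N \<ge> 1 \<and> normal_subgroup (TN G N) G}"

definition coset_reps :: "'n::finite euc set \<Rightarrow> nat \<Rightarrow> 'n euc set \<Rightarrow> bool" where
  "coset_reps G N C \<longleftrightarrow> C \<subseteq> G \<and> (\<forall>g\<in>G. \<exists>!c. c \<in> C \<and> emul (einv c) g \<in> TN G N)"

definition periodic :: "'n::finite euc set \<Rightarrow> nat \<Rightarrow> ('n euc \<Rightarrow> real^'n) \<Rightarrow> bool" where
  "periodic G N u \<longleftrightarrow> (\<forall>g\<in>G. \<forall>t\<in>TN G N. u (emul g t) = u g)"

definition skew :: "real^'n^'n \<Rightarrow> bool" where
  "skew S \<longleftrightarrow> transpose S = - S"

text \<open>U_iso(R) (maps compared only on R).\<close>
definition Uiso :: "real^'n::finite \<Rightarrow> 'n euc set \<Rightarrow> ('n euc \<Rightarrow> real^'n) set" where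
  "Uiso x0 R = {v. \<exists>a S. skew S \<and> (\<forall>g\<in>R. rot g *v v g = a + S *v (eact g x0 - x0))}"

text \<open>U_iso,0,0(R) for d1 = 0: S = S1 \<oplus> 0 with S1 in Skew(0), i.e. S = 0.\<close>
definition Uiso00 :: "real^'n::finite \<Rightarrow> 'n euc set \<Rightarrow> ('n euc \<Rightarrow> real^'n) set" where
  "Uiso00 x0 R = {v. \<exists>a. \<forall>g\<in>R. rot g *v v g = a}"

definition distR :: "'n::finite euc set \<Rightarrow> ('n euc \<Rightarrow> real^'n) \<Rightarrow> ('n euc \<Rightarrow> real^'n) set \<Rightarrow> real" where
  "distR R v U = Inf {sqrt (\<Sum>h\<in>R. (norm (v h - w h))\<^sup>2) | w. w \<in> U}"

definition normR :: "real^'n::finite \<Rightarrow> 'n euc set \<Rightarrow> 'n euc set \<Rightarrow> ('n euc \<Rightarrow> real^'n) \<Rightarrow> real" where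
  "normR x0 R C u = sqrt ((1 / real (card C)) * (\<Sum>g\<in>C. (distR R (\<lambda>h. u (emul g h)) (Uiso x0 R))\<^sup>2))"

definition normR00 :: "real^'n::finite \<Rightarrow> 'n euc set \<Rightarrow> 'n euc set \<Rightarrow> ('n euc \<Rightarrow> real^'n) \<Rightarrow> real" where
  "normR00 x0 R C u = sqrt ((1 / real (card C)) * (\<Sum>g\<in>C. (distR R (\<lambda>h. u (emul g h)) (Uiso00 x0 R))\<^sup>2))"

definition gradR :: "'n::finite euc set \<Rightarrow> 'n euc set \<Rightarrow> ('n euc \<Rightarrow> real^'n) \<Rightarrow> real" where
  "gradR R C u = sqrt ((1 / real (card C)) *
      (\<Sum>g\<in>C. \<Sum>h\<in>R. (norm (u (emul g h) - transpose (rot h) *v u g))\<^sup>2))"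

inductive_set generated :: "'n::finite euc set \<Rightarrow> 'n euc set" for R where
  gen_id: "eid \<in> generated R"
| gen_base: "r \<in> R \<Longrightarrow> r \<in> generated R"
| gen_mul: "x \<in> generated R \<Longrightarrow> y \<in> generated R \<Longrightarrow> emul x y \<in> generated R"
| gen_inv: "x \<in> generated R \<Longrightarrow> einv x \<in> generated R"

definition property1 :: "'n::finite euc set \<Rightarrow> real^'n \<Rightarrow> 'n euc set \<Rightarrow> bool" where
  "property1 G x0 R \<longleftrightarrow> R \<subseteq> G \<and> finite R \<and> eid \<in> R \<and>
     affine hull ((\<lambda>g. eact g x0) ` R) = affine hull ((\<lambda>g. eact g x0) ` G)"

definition property2 :: "'n::finite euc set \<Rightarrow> real^'n \<Rightarrow> 'n euc set \<Rightarrow> bool" where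
  "property2 G x0 R \<longleftrightarrow> R \<subseteq> G \<and> finite R \<and>
     (\<exists>R' R''. R' \<subseteq> G \<and> eid \<in> R' \<and> generated R' = G \<and> property1 G x0 R'' \<and>
        {emul g h | g h. g \<in> R' \<and> h \<in> R''} \<subseteq> R)"

end

theory Submission
  imports Defs "HOL-Analysis.Analysis"
begin


definition orth :: "'n::finite euc \<Rightarrow> bool" where
  "orth g \<longleftrightarrow> orthogonal_matrix (fst g)"

lemma orthD: "orth g \<Longrightarrow> transpose (fst g) ** fst g = mat 1" "orth g \<Longrightarrow> fst g ** transpose (fst g) = mat 1"
  by (auto simp: orth_def orthogonal_matrix_def)

lemma emul_assoc: "emul (emul a b) c = emul a (emul b c)"
  by (simp add: emul_def matrix_mul_assoc matrix_vector_mul_assoc matrix_vector_right_distrib add.assoc)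

lemma emul_eid[simp]: "emul eid g = g" "emul g eid = g"
  by (simp_all add: emul_def eid_def)

lemma fst_emul[simp]: "fst (emul g h) = fst g ** fst h" by (simp add: emul_def)
lemma snd_emul[simp]: "snd (emul g h) = snd g + fst g *v snd h" by (simp add: emul_def)
lemma fst_einv[simp]: "fst (einv g) = transpose (fst g)" by (simp add: einv_def)
lemma snd_einv[simp]: "snd (einv g) = - (transpose (fst g) *v snd g)" by (simp add: einv_def)

lemma mvneg_left: "(- A) *v x = - (A *v (x::real^'n::finite))"
  by (simp add: vec_eq_iff matrix_vector_mult_def sum_negf)

lemma einv_cancel[simp]:
  assumes "orth g"
  shows "emul (einv g) g = eid" "emul g (einv g) = eid"
    "emul (einv g) (emul g h) = h" "emul g (emul (einv g) h) = h"
proof -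
  have a: "transpose (fst g) ** fst g = mat 1" "fst g ** transpose (fst g) = mat 1" using orthD[OF assms] by auto
  show 1: "emul (einv g) g = eid"
    by (simp add: emul_def einv_def eid_def a matrix_vector_mul_assoc[symmetric])
  have b: "fst g *v (transpose (fst g) *v snd g) = snd g"
    by (metis matrix_vector_mul_assoc a(2) matrix_vector_mul_lid)
  show 2: "emul g (einv g) = eid"
    using b by (simp add: emul_def einv_def eid_def a vec.neg)
  show "emul (einv g) (emul g h) = h" by (metis 1 emul_assoc emul_eid(1))
  show "emul g (emul (einv g) h) = h" by (metis 2 emul_assoc emul_eid(1))
qed

lemma orth_emul[simp]: "orth g \<Longrightarrow> orth h \<Longrightarrow> orth (emul g h)"
  by (simp add: orth_def orthogonal_matrix_mul)
lemma orth_einv[simp]: "orth g \<Longrightarrow> orth (einv g)"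
  by (simp add: orth_def)
lemma orth_eid[simp]: "orth eid" by (simp add: orth_def eid_def orthogonal_matrix_id)

lemma einv_einv[simp]: "orth g \<Longrightarrow> einv (einv g) = g"
  by (metis einv_cancel(2,3) emul_eid(2) orth_einv)

lemma einv_emul: "orth a \<Longrightarrow> orth b \<Longrightarrow> einv (emul a b) = emul (einv b) (einv a)"
proof -
  assume a: "orth a" and b: "orth b"
  have "emul (emul (einv b) (einv a)) (emul a b) = eid"
    by (simp add: emul_assoc a b)
  hence "emul (emul (emul (einv b) (einv a)) (emul a b)) (einv (emul a b)) = einv (emul a b)" by simp
  moreover have "emul (emul (emul (einv b) (einv a)) (emul a b)) (einv (emul a b)) = emul (einv b) (einv a)"
    by (metis emul_assoc einv_cancel(2) emul_eid(2) orth_emul a b)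
  ultimately show ?thesis by simp
qed

lemma orth_norm: "orthogonal_matrix (Q::real^'n::finite^'n) \<Longrightarrow> norm (Q *v x) = norm x"
  by (metis orthogonal_transformation_matrix orthogonal_transformation_norm matrix_of_matrix_vector_mul matrix_vector_mul_linear)

lemma orth_norm': "orth g \<Longrightarrow> norm (fst g *v x) = norm x"
  by (simp add: orth_def orth_norm)

lemma eact_emul: "eact (emul g h) x = eact g (eact h x)"
  by (simp add: eact_def matrix_vector_mul_assoc[symmetric] matrix_vector_right_distrib add_ac)

lemma eact_diff: "eact g y - eact g z = fst g *v (y - z)"
  by (simp add: eact_def matrix_vector_mult_diff_distrib)

lemma inner_mv: "inner (A *v x) y = inner x (transpose A *v (y::real^'n::finite))"
  by (metis dot_lmul_matrix vector_transpose_matrix)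

lemma skew_inner: "skew S \<Longrightarrow> inner (S *v x) y = - inner (S *v y) (x::real^'n::finite)"
proof -
  assume "skew S"
  hence t: "transpose S = - S" by (simp add: skew_def)
  have "inner (S *v x) y = inner x (transpose S *v y)" by (rule inner_mv)
  also have "\<dots> = - inner (S *v y) x" by (simp add: t mvneg_left inner_commute)
  finally show ?thesis .
qed

lemma skew_inner0: "skew S \<Longrightarrow> inner (S *v x) (x::real^'n::finite) = 0"
  using skew_inner[of S x x] by simp

lemma sub_orth: "euc_subgroup G \<Longrightarrow> g \<in> G \<Longrightarrow> orth g"
  by (simp add: euc_subgroup_def orth_def)
lemma sub_mul: "euc_subgroup G \<Longrightarrow> g \<in> G \<Longrightarrow> h \<in> G \<Longrightarrow> emul g h \<in> G"
  by (simp add: euc_subgroup_def)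
lemma sub_inv: "euc_subgroup G \<Longrightarrow> g \<in> G \<Longrightarrow> einv g \<in> G"
  by (simp add: euc_subgroup_def)
lemma sub_eid: "euc_subgroup G \<Longrightarrow> eid \<in> G"
  by (simp add: euc_subgroup_def)

lemma fst_epow: "fst t = mat 1 \<Longrightarrow> fst (epow t N) = mat 1"
  by (induction N) (auto simp: eid_def)

lemma TN_fst: "t \<in> TN G N \<Longrightarrow> fst t = mat 1"
  by (auto simp: TN_def transl_def fst_epow)


locale cosets =
  fixes G :: "'n::finite euc set" and N :: nat and C :: "'n euc set"
  assumes subG: "euc_subgroup G"
    and normH: "normal_subgroup (TN G N) G"
    and reps: "coset_reps G N C"
    and finC: "finite C"
begin

abbreviation "H \<equiv> TN G N"

lemma subH: "euc_subgroup H" and HG: "H \<subseteq> G"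
  using normH by (auto simp: normal_subgroup_def)

lemma CG: "C \<subseteq> G" using reps by (simp add: coset_reps_def)

lemma G_orth: "g \<in> G \<Longrightarrow> orth g" using sub_orth[OF subG] .
lemma G_mul: "g \<in> G \<Longrightarrow> h \<in> G \<Longrightarrow> emul g h \<in> G" using sub_mul[OF subG] .
lemma G_inv: "g \<in> G \<Longrightarrow> einv g \<in> G" using sub_inv[OF subG] .
lemma H_mul: "g \<in> H \<Longrightarrow> h \<in> H \<Longrightarrow> emul g h \<in> H" using sub_mul[OF subH] .
lemma H_inv: "g \<in> H \<Longrightarrow> einv g \<in> H" using sub_inv[OF subH] .
lemma H_eid: "eid \<in> H" using sub_eid[OF subH] .
lemma H_conj: "g \<in> G \<Longrightarrow> h \<in> H \<Longrightarrow> emul (emul g h) (einv g) \<in> H"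
  using normH by (simp add: normal_subgroup_def)

lemma unique_rep: "g \<in> G \<Longrightarrow> \<exists>!c. c \<in> C \<and> emul (einv c) g \<in> H"
  using reps by (simp add: coset_reps_def)

definition rep :: "'n euc \<Rightarrow> 'n euc" where
  "rep g = (THE c. c \<in> C \<and> emul (einv c) g \<in> H)"

lemma rep: "g \<in> G \<Longrightarrow> rep g \<in> C \<and> emul (einv (rep g)) g \<in> H"
  unfolding rep_def by (rule theI'[OF unique_rep])

lemma rep_unique: "g \<in> G \<Longrightarrow> c \<in> C \<Longrightarrow> emul (einv c) g \<in> H \<Longrightarrow> rep g = c"
  using rep unique_rep by blast

lemma rep_C: "c \<in> C \<Longrightarrow> rep c = c"
  using CG by (intro rep_unique) (auto simp: G_orth H_eid)

lemma rep_decomp: "g \<in> G \<Longrightarrow> emul (rep g) (emul (einv (rep g)) g) = g"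
proof -
  assume g: "g \<in> G"
  hence "rep g \<in> G" using rep CG by blast
  thus ?thesis using G_orth by simp
qed

definition "per f \<longleftrightarrow> (\<forall>g\<in>G. \<forall>t\<in>H. f (emul g t) = f g)"

lemma per_rep: "per f \<Longrightarrow> g \<in> G \<Longrightarrow> f (rep g) = f g"
  unfolding per_def by (metis rep rep_decomp CG subsetD)

lemma rep_mul: "g \<in> G \<Longrightarrow> t \<in> H \<Longrightarrow> rep (emul g t) = rep g"
proof -
  assume g: "g \<in> G" and t: "t \<in> H"
  have "emul (einv (rep g)) (emul g t) = emul (emul (einv (rep g)) g) t" by (simp add: emul_assoc)
  also have "\<dots> \<in> H" using rep[OF g] t H_mul by blast
  finally show ?thesis using g t HG rep g CG by (intro rep_unique) (auto intro: G_mul)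
qed

lemma per_comp_rep: "per (\<lambda>g. f (rep g))"
  unfolding per_def using rep_mul by simp

lemma sum_bij:
  assumes "\<And>c. c \<in> C \<Longrightarrow> \<phi> c \<in> C" "inj_on \<phi> C"
  shows "(\<Sum>c\<in>C. f (\<phi> c)) = (\<Sum>c\<in>C. f c)"
proof -
  have "\<phi> ` C = C" using endo_inj_surj[OF finC _ assms(2)] assms(1) by blast
  thus ?thesis using sum.reindex[OF assms(2), of f] by simp
qed

lemma reindex_left:
  assumes y: "y \<in> G" and f: "per f"
  shows "(\<Sum>c\<in>C. f (emul y c)) = (\<Sum>c\<in>C. f c)"
proof -
  define \<phi> where "\<phi> c = rep (emul y c)" for c
  have yc: "c \<in> C \<Longrightarrow> emul y c \<in> G" for c by (meson CG y G_mul subsetD)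
  have 1: "(\<Sum>c\<in>C. f (emul y c)) = (\<Sum>c\<in>C. f (\<phi> c))"
    using per_rep[OF f] yc by (simp add: \<phi>_def)
  have inj: "inj_on \<phi> C"
  proof
    fix c1 c2 assume c1: "c1 \<in> C" and c2: "c2 \<in> C" and e: "\<phi> c1 = \<phi> c2"
    define d where "d = \<phi> c1"
    have d: "d \<in> C" "emul (einv d) (emul y c1) \<in> H" "emul (einv d) (emul y c2) \<in> H"
      using rep[OF yc[OF c1]] rep[OF yc[OF c2]] e by (auto simp: d_def \<phi>_def)
    have o: "orth c1" "orth c2" "orth d" "orth y" using c1 c2 d(1) CG y G_orth by blast+
    have "emul (einv (emul (einv d) (emul y c1))) (emul (einv d) (emul y c2)) \<in> H"
      using d H_mul H_inv by blast
    also have "emul (einv (emul (einv d) (emul y c1))) (emul (einv d) (emul y c2)) = emul (einv c1) c2"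
      using o by (simp add: einv_emul emul_assoc)
    finally have "emul (einv c1) c2 \<in> H" .
    moreover have "emul (einv c2) c2 \<in> H" using o H_eid by simp
    ultimately show "c1 = c2" using unique_rep[of c2] c1 c2 CG by blast
  qed
  have 2: "(\<Sum>c\<in>C. f (\<phi> c)) = (\<Sum>c\<in>C. f c)"
  proof (rule sum_bij[OF _ inj])
    fix c assume "c \<in> C" thus "\<phi> c \<in> C" unfolding \<phi>_def using rep[OF yc] by simp
  qed
  show ?thesis using 1 2 by simp
qed

lemma reindex_right:
  assumes y: "y \<in> G" and f: "per f"
  shows "(\<Sum>c\<in>C. f (emul c y)) = (\<Sum>c\<in>C. f c)"
proof -
  define \<phi> where "\<phi> c = rep (emul c y)" for c
  have yc: "c \<in> C \<Longrightarrow> emul c y \<in> G" for c by (meson CG y G_mul subsetD)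
  have 1: "(\<Sum>c\<in>C. f (emul c y)) = (\<Sum>c\<in>C. f (\<phi> c))"
    using per_rep[OF f] yc by (simp add: \<phi>_def)
  have inj: "inj_on \<phi> C"
  proof
    fix c1 c2 assume c1: "c1 \<in> C" and c2: "c2 \<in> C" and e: "\<phi> c1 = \<phi> c2"
    define d where "d = \<phi> c1"
    have d: "d \<in> C" "emul (einv d) (emul c1 y) \<in> H" "emul (einv d) (emul c2 y) \<in> H"
      using rep[OF yc[OF c1]] rep[OF yc[OF c2]] e by (auto simp: d_def \<phi>_def)
    have dG: "d \<in> G" and c1G: "c1 \<in> G" and c2G: "c2 \<in> G" using d c1 c2 CG by auto
    have o: "orth c1" "orth c2" "orth d" "orth y" using c1 c2 d(1) CG y G_orth by blast+
    have "emul (emul d (emul (emul (einv d) (emul c1 y)) (einv (emul (einv d) (emul c2 y))))) (einv d) \<in> H"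
      using d H_mul H_inv H_conj dG by blast
    also have "emul (emul d (emul (emul (einv d) (emul c1 y)) (einv (emul (einv d) (emul c2 y))))) (einv d)
       = emul c1 (einv c2)"
      using o by (simp add: einv_emul emul_assoc)
    finally have k: "emul c1 (einv c2) \<in> H" .
    have "emul (emul (einv c2) (emul c1 (einv c2))) (einv (einv c2)) \<in> H"
      using H_conj[OF G_inv[OF c2G] k] by (simp add: emul_assoc)
    hence "emul (einv c2) c1 \<in> H" using o by (simp add: emul_assoc)
    hence "einv (emul (einv c2) c1) \<in> H" by (rule H_inv)
    hence "emul (einv c1) c2 \<in> H" using o by (simp add: einv_emul)
    moreover have "emul (einv c2) c2 \<in> H" using o H_eid by simp
    ultimately show "c1 = c2" using unique_rep[of c2] c1 c2 CG by blast
  qed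
  have 2: "(\<Sum>c\<in>C. f (\<phi> c)) = (\<Sum>c\<in>C. f c)"
  proof (rule sum_bij[OF _ inj])
    fix c assume "c \<in> C" thus "\<phi> c \<in> C" unfolding \<phi>_def using rep[OF yc] by simp
  qed
  show ?thesis using 1 2 by simp
qed

end


lemma span_coeffs:
  fixes Z :: "'a::euclidean_space set"
  assumes fin: "finite Z" and sp: "span Z = UNIV"
  shows "\<exists>\<kappa>\<ge>0. \<forall>y. \<exists>l. y = (\<Sum>z\<in>Z. l z *\<^sub>R z) \<and> (\<Sum>z\<in>Z. \<bar>l z\<bar>) \<le> \<kappa> * norm y"
proof -
  have "\<exists>m. (\<Sum>z\<in>Z. m z *\<^sub>R z) = i" for i
  proof -
    have "i \<in> range (\<lambda>u. \<Sum>v\<in>Z. u v *\<^sub>R v)" using span_finite[OF fin] sp by simp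
    thus ?thesis by auto
  qed
  then obtain m where m: "\<And>i. (\<Sum>z\<in>Z. m i z *\<^sub>R z) = i" by metis
  define \<kappa> where "\<kappa> = (\<Sum>z\<in>Z. \<Sum>i\<in>Basis. \<bar>m i z\<bar>)"
  have k0: "\<kappa> \<ge> 0" unfolding \<kappa>_def by (intro sum_nonneg) auto
  have "\<exists>l. y = (\<Sum>z\<in>Z. l z *\<^sub>R z) \<and> (\<Sum>z\<in>Z. \<bar>l z\<bar>) \<le> \<kappa> * norm y" for y
  proof (intro exI conjI)
    let ?l = "\<lambda>z. \<Sum>i\<in>Basis. (inner y i) * m i z"
    have "(\<Sum>z\<in>Z. ?l z *\<^sub>R z) = (\<Sum>z\<in>Z. \<Sum>i\<in>Basis. (inner y i) *\<^sub>R (m i z *\<^sub>R z))"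
      by (simp add: scaleR_sum_left)
    also have "\<dots> = (\<Sum>i\<in>Basis. (inner y i) *\<^sub>R (\<Sum>z\<in>Z. m i z *\<^sub>R z))"
      by (subst sum.swap) (simp add: scaleR_sum_right)
    also have "\<dots> = (\<Sum>i\<in>Basis. (inner y i) *\<^sub>R i)" by (simp add: m)
    also have "\<dots> = y" by (rule euclidean_representation)
    finally show "y = (\<Sum>z\<in>Z. ?l z *\<^sub>R z)" by simp
    have "(\<Sum>z\<in>Z. \<bar>?l z\<bar>) \<le> (\<Sum>z\<in>Z. \<Sum>i\<in>Basis. norm y * \<bar>m i z\<bar>)"
    proof (intro sum_mono)
      fix z
      have "\<bar>?l z\<bar> \<le> (\<Sum>i\<in>Basis. \<bar>inner y i * m i z\<bar>)" by (rule sum_abs)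
      also have "\<dots> \<le> (\<Sum>i\<in>Basis. norm y * \<bar>m i z\<bar>)"
        by (intro sum_mono) (simp add: abs_mult Basis_le_norm mult_right_mono)
      finally show "\<bar>?l z\<bar> \<le> (\<Sum>i\<in>Basis. norm y * \<bar>m i z\<bar>)" .
    qed
    also have "\<dots> = \<kappa> * norm y" by (simp add: \<kappa>_def sum_distrib_left mult.commute)
    finally show "(\<Sum>z\<in>Z. \<bar>?l z\<bar>) \<le> \<kappa> * norm y" .
  qed
  thus ?thesis using k0 by (intro exI[of _ \<kappa>]) simp
qed

lemma mat_bound:
  fixes Z :: "(real^'n::finite) set"
  assumes fin: "finite Z" and sp: "span Z = UNIV"
  shows "\<exists>\<kappa>\<ge>0. \<forall>(S::real^'n^'n) y. norm (S *v y) \<le> \<kappa> * norm y * (\<Sum>z\<in>Z. norm (S *v z))"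
proof -
  obtain \<kappa> where k: "\<kappa> \<ge> 0" "\<And>y. \<exists>l. y = (\<Sum>z\<in>Z. l z *\<^sub>R z) \<and> (\<Sum>z\<in>Z. \<bar>l z\<bar>) \<le> \<kappa> * norm y"
    using span_coeffs[OF fin sp] by blast
  have "norm (S *v y) \<le> \<kappa> * norm y * (\<Sum>z\<in>Z. norm (S *v z))" for S :: "real^'n^'n" and y
  proof -
    obtain l where l: "y = (\<Sum>z\<in>Z. l z *\<^sub>R z)" "(\<Sum>z\<in>Z. \<bar>l z\<bar>) \<le> \<kappa> * norm y" using k(2) by blast
    let ?T = "\<Sum>z\<in>Z. norm (S *v z)"
    have T0: "?T \<ge> 0" by (intro sum_nonneg) auto
    have "S *v y = (\<Sum>z\<in>Z. l z *\<^sub>R (S *v z))" by (simp add: l(1) vec.sum matrix_vector_mult_scaleR)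
    hence "norm (S *v y) \<le> (\<Sum>z\<in>Z. norm (l z *\<^sub>R (S *v z)))" by (metis norm_sum)
    also have "\<dots> \<le> (\<Sum>z\<in>Z. \<bar>l z\<bar> * ?T)"
    proof (intro sum_mono)
      fix z assume z: "z \<in> Z"
      have "norm (S *v z) \<le> ?T" by (rule member_le_sum[OF z]) (auto simp: fin)
      thus "norm (l z *\<^sub>R (S *v z)) \<le> \<bar>l z\<bar> * ?T" by (simp add: mult_left_mono)
    qed
    also have "\<dots> = (\<Sum>z\<in>Z. \<bar>l z\<bar>) * ?T" by (simp add: sum_distrib_right)
    also have "\<dots> \<le> \<kappa> * norm y * ?T" by (rule mult_right_mono[OF l(2) T0])
    finally show ?thesis .
  qed
  hence "\<forall>(S::real^'n^'n) y. norm (S *v y) \<le> \<kappa> * norm y * (\<Sum>z\<in>Z. norm (S *v z))" by blast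
  thus ?thesis using k(1) by (intro exI[of _ \<kappa>]) simp
qed

lemma vec_bound:
  fixes B :: "(real^'n::finite) set"
  assumes fin: "finite B" and sp: "span B = UNIV"
  shows "\<exists>\<kappa>\<ge>0. \<forall>v. norm v \<le> \<kappa> * (\<Sum>b\<in>B. \<bar>inner v b\<bar>)"
proof -
  obtain \<kappa> where k: "\<kappa> \<ge> 0" "\<And>y. \<exists>l. y = (\<Sum>z\<in>B. l z *\<^sub>R z) \<and> (\<Sum>z\<in>B. \<bar>l z\<bar>) \<le> \<kappa> * norm y"
    using span_coeffs[OF fin sp] by blast
  have "norm v \<le> \<kappa> * (\<Sum>b\<in>B. \<bar>inner v b\<bar>)" for v
  proof -
    obtain l where l: "v = (\<Sum>z\<in>B. l z *\<^sub>R z)" "(\<Sum>z\<in>B. \<bar>l z\<bar>) \<le> \<kappa> * norm v" using k(2) by blast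
    let ?T = "\<Sum>b\<in>B. \<bar>inner v b\<bar>"
    have T0: "?T \<ge> 0" by (intro sum_nonneg) auto
    have "(norm v)\<^sup>2 = inner v v" by (simp add: power2_norm_eq_inner)
    also have "\<dots> = (\<Sum>z\<in>B. l z * inner v z)" by (subst (2) l(1)) (simp add: inner_sum_right)
    also have "\<dots> \<le> (\<Sum>z\<in>B. \<bar>l z\<bar> * ?T)"
    proof (intro sum_mono)
      fix z assume z: "z \<in> B"
      have "l z * inner v z \<le> \<bar>l z\<bar> * \<bar>inner v z\<bar>" by (metis abs_ge_self abs_mult)
      also have "\<dots> \<le> \<bar>l z\<bar> * ?T" by (intro mult_left_mono) (auto intro: member_le_sum[OF z] fin)
      finally show "l z * inner v z \<le> \<bar>l z\<bar> * ?T" .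
    qed
    also have "\<dots> = (\<Sum>z\<in>B. \<bar>l z\<bar>) * ?T" by (simp add: sum_distrib_right)
    also have "\<dots> \<le> \<kappa> * norm v * ?T" by (rule mult_right_mono[OF l(2) T0])
    finally have *: "norm v * norm v \<le> norm v * (\<kappa> * ?T)" by (simp add: power2_eq_square mult_ac)
    show ?thesis
    proof (cases "norm v = 0")
      case True thus ?thesis using k(1) T0 by simp
    next
      case False thus ?thesis using * by (simp add: mult_le_cancel_left)
    qed
  qed
  hence "\<forall>v. norm v \<le> \<kappa> * (\<Sum>b\<in>B. \<bar>inner v b\<bar>)" by blast
  thus ?thesis using k(1) by (intro exI[of _ \<kappa>]) simp
qed

lemma sum_list_sq:
  fixes f :: "'a \<Rightarrow> real"
  shows "(sum_list (map f xs))\<^sup>2 \<le> real (length xs) * sum_list (map (\<lambda>x. (f x)\<^sup>2) xs)"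
proof -
  have a: "sum_list (map f xs) = (\<Sum>i\<in>{0..<length xs}. f (xs ! i))" by (simp add: sum_list_sum_nth)
  have b: "sum_list (map (\<lambda>x. (f x)\<^sup>2) xs) = (\<Sum>i\<in>{0..<length xs}. (f (xs ! i))\<^sup>2)" by (simp add: sum_list_sum_nth)
  show ?thesis using sum_squared_le_sum_of_squares[of "\<lambda>i. f (xs ! i)" "{0..<length xs}"]
    by (simp add: a b mult.commute)
qed

lemma sum_list_nonneg': "(\<And>x. x \<in> set xs \<Longrightarrow> f x \<ge> (0::real)) \<Longrightarrow> sum_list (map f xs) \<ge> 0"
  by (induction xs) auto

lemma sum_list_sum_swap:
  "(\<Sum>c\<in>C. sum_list (map (\<lambda>x. f c x) xs)) = sum_list (map (\<lambda>x. \<Sum>c\<in>C. f c x) xs)"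
  by (induction xs) (auto simp: sum.distrib)


definition resid :: "real^'n::finite \<Rightarrow> ('n euc \<Rightarrow> real^'n) \<Rightarrow> ('n euc \<Rightarrow> real^'n) \<Rightarrow> ('n euc \<Rightarrow> real^'n^'n) \<Rightarrow> 'n euc \<Rightarrow> 'n euc \<Rightarrow> real^'n" where
  "resid x0 W a S g h = W (emul g h) - a g - S g *v (eact (emul g h) x0 - eact g x0)"

definition Eloc :: "'n::finite euc set \<Rightarrow> real^'n \<Rightarrow> ('n euc \<Rightarrow> real^'n) \<Rightarrow> ('n euc \<Rightarrow> real^'n) \<Rightarrow> ('n euc \<Rightarrow> real^'n^'n) \<Rightarrow> 'n euc \<Rightarrow> real" where
  "Eloc R x0 W a S g = (\<Sum>h\<in>R. (norm (resid x0 W a S g h))\<^sup>2)"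

definition SL :: "'n::finite euc set \<Rightarrow> real^'n \<Rightarrow> ('n euc \<Rightarrow> real^'n) \<Rightarrow> ('n euc \<Rightarrow> real^'n) \<Rightarrow> ('n euc \<Rightarrow> real^'n^'n) \<Rightarrow> 'n euc list \<Rightarrow> 'n euc \<Rightarrow> real" where
  "SL R x0 W a S fs g = sum_list (map (\<lambda>f. sqrt (Eloc R x0 W a S (emul g f))) fs)"

lemma Eloc_nonneg[simp]: "Eloc R x0 W a S g \<ge> 0"
  unfolding Eloc_def by (intro sum_nonneg) auto

lemma resid_le: "finite R \<Longrightarrow> h \<in> R \<Longrightarrow> norm (resid x0 W a S g h) \<le> sqrt (Eloc R x0 W a S g)"
  unfolding Eloc_def
  by (intro real_le_rsqrt member_le_sum[of h R "\<lambda>h. (norm (resid x0 W a S g h))\<^sup>2"]) auto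

lemma resid_eid: "resid x0 W a S g eid = W g - a g"
  by (simp add: resid_def)

lemma SL_nonneg: "SL R x0 W a S fs g \<ge> 0"
  unfolding SL_def by (intro sum_list_nonneg') auto

lemma SL_append: "SL R x0 W a S (xs @ ys) g = SL R x0 W a S xs g + SL R x0 W a S ys g"
  by (simp add: SL_def)

lemma SL_map: "SL R x0 W a S (map (emul x) fs) g = SL R x0 W a S fs (emul g x)"
  by (simp add: SL_def comp_def emul_assoc)

lemma SL_two: "SL R x0 W a S [eid, r] g = sqrt (Eloc R x0 W a S g) + sqrt (Eloc R x0 W a S (emul g r))"
  by (simp add: SL_def)

locale chainsetup =
  fixes G :: "'n::finite euc set" and R R' R'' :: "'n euc set" and x0 :: "real^'n"
  assumes subG: "euc_subgroup G"
    and R'G: "R' \<subseteq> G" and eidR': "eid \<in> R'" and genR': "generated R' = G"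
    and R''G: "R'' \<subseteq> G" and eidR'': "eid \<in> R''" and finR'': "finite R''"
    and finR: "finite R" and prodR: "\<And>g h. g \<in> R' \<Longrightarrow> h \<in> R'' \<Longrightarrow> emul g h \<in> R"
    and spanZ: "span ((\<lambda>h. eact h x0 - x0) ` R'') = UNIV"
begin

lemma G_orth: "g \<in> G \<Longrightarrow> orth g" using sub_orth[OF subG] .
lemma G_mul: "g \<in> G \<Longrightarrow> h \<in> G \<Longrightarrow> emul g h \<in> G" using sub_mul[OF subG] .
lemma G_inv: "g \<in> G \<Longrightarrow> einv g \<in> G" using sub_inv[OF subG] .

abbreviation "Z \<equiv> (\<lambda>h. eact h x0 - x0) ` R''"

lemma eidR: "eid \<in> R" using prodR[OF eidR' eidR''] by simp
lemma R'R: "r \<in> R' \<Longrightarrow> r \<in> R" using prodR[OF _ eidR''] by (metis emul_eid(2))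
lemma R''R: "h \<in> R'' \<Longrightarrow> h \<in> R" using prodR[OF eidR'] by (metis emul_eid(1))

definition "chainprop x \<longleftrightarrow> (\<exists>fs K. set fs \<subseteq> G \<and> K \<ge> 0 \<and>
   (\<forall>W a S g y. g \<in> G \<longrightarrow>
      norm (W (emul g x) - W g - S g *v (eact (emul g x) x0 - eact g x0)) \<le> K * SL R x0 W a S fs g \<and>
      norm ((S (emul g x) - S g) *v y) \<le> K * norm y * SL R x0 W a S fs g))"

lemma chain_id: "chainprop eid"
  unfolding chainprop_def by (rule exI[of _ "[]"], rule exI[of _ 0]) (simp add: SL_def)

lemma base_identity:
  "(S (emul g r) - S g) *v (eact (emul (emul g r) h) x0 - eact (emul g r) x0) =
    (resid x0 W a S g (emul r h) - resid x0 W a S (emul g r) h) - (resid x0 W a S g r - resid x0 W a S (emul g r) eid)"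
  by (simp add: resid_def emul_assoc matrix_vector_mult_diff_distrib matrix_vector_mult_diff_rdistrib algebra_simps)

lemma chain_base:
  assumes r: "r \<in> R'"
  shows "chainprop r"
proof -
  obtain \<kappa> where k: "\<kappa> \<ge> 0" "\<And>(M::real^'n^'n) y. norm (M *v y) \<le> \<kappa> * norm y * (\<Sum>z\<in>Z. norm (M *v z))"
    using mat_bound[OF finite_imageI[OF finR''] spanZ] by blast
  define K where "K = 2 + 2 * \<kappa> * real (card Z)"
  have K0: "K \<ge> 0" using k(1) by (simp add: K_def)
  have rR: "r \<in> R" using R'R[OF r] .
  have rG: "r \<in> G" using r R'G by blast
  have "set [eid, r] \<subseteq> G" using rG sub_eid[OF subG] by simp
  moreover have "norm (W (emul g r) - W g - S g *v (eact (emul g r) x0 - eact g x0)) \<le> K * SL R x0 W a S [eid, r] g \<and>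
      norm ((S (emul g r) - S g) *v y) \<le> K * norm y * SL R x0 W a S [eid, r] g"
    if g: "g \<in> G" for W a S g y
  proof
    let ?E1 = "sqrt (Eloc R x0 W a S g)" and ?E2 = "sqrt (Eloc R x0 W a S (emul g r))"
    have E1: "?E1 \<ge> 0" and E2: "?E2 \<ge> 0" by auto
    have SLe: "SL R x0 W a S [eid, r] g = ?E1 + ?E2" by (rule SL_two)
    have "W (emul g r) - W g - S g *v (eact (emul g r) x0 - eact g x0) = resid x0 W a S g r - resid x0 W a S g eid"
      by (simp add: resid_def)
    hence "norm (W (emul g r) - W g - S g *v (eact (emul g r) x0 - eact g x0)) \<le> norm (resid x0 W a S g r) + norm (resid x0 W a S g eid)"
      by (simp add: norm_triangle_ineq4)
    also have "\<dots> \<le> ?E1 + ?E1"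
      using resid_le[OF finR rR, of x0 W a S g] resid_le[OF finR eidR, of x0 W a S g] by (rule add_mono)
    also have "\<dots> \<le> K * SL R x0 W a S [eid, r] g"
    proof -
      have "?E1 + ?E1 \<le> 2 * (?E1 + ?E2)" using E2 by simp
      also have "\<dots> \<le> K * (?E1 + ?E2)" using E1 E2 k(1) by (intro mult_right_mono) (auto simp: K_def)
      finally show ?thesis by (simp add: SLe)
    qed
    finally show "norm (W (emul g r) - W g - S g *v (eact (emul g r) x0 - eact g x0)) \<le> K * SL R x0 W a S [eid, r] g" .
    define A where "A = fst (emul g r)"
    have grG: "emul g r \<in> G" using G_mul[OF g rG] .
    have oA: "orthogonal_matrix A" using G_orth[OF grG] by (simp add: A_def orth_def)
    define M where "M = (S (emul g r) - S g) ** A"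
    have "(S (emul g r) - S g) *v y = M *v (transpose A *v y)"
    proof -
      have "A ** transpose A = mat 1" using oA by (simp add: orthogonal_matrix_def)
      thus ?thesis unfolding M_def by (metis matrix_vector_mul_assoc matrix_vector_mul_lid)
    qed
    hence "norm ((S (emul g r) - S g) *v y) \<le> \<kappa> * norm y * (\<Sum>z\<in>Z. norm (M *v z))"
      using k(2)[of M "transpose A *v y"] orth_norm[of "transpose A" y] oA by simp
    also have "(\<Sum>z\<in>Z. norm (M *v z)) \<le> (\<Sum>z\<in>Z. 2 * (?E1 + ?E2))"
    proof (intro sum_mono)
      fix z assume "z \<in> Z"
      then obtain h where h: "h \<in> R''" and z: "z = eact h x0 - x0" by blast
      have "M *v z = (S (emul g r) - S g) *v (eact (emul (emul g r) h) x0 - eact (emul g r) x0)"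
        by (simp add: M_def z A_def eact_emul eact_diff matrix_vector_mul_assoc[symmetric])
      also have "\<dots> = (resid x0 W a S g (emul r h) - resid x0 W a S (emul g r) h) - (resid x0 W a S g r - resid x0 W a S (emul g r) eid)"
        by (rule base_identity)
      finally have eq: "M *v z = \<dots>" .
      have rhR: "emul r h \<in> R" using prodR[OF r h] .
      have hR: "h \<in> R" using R''R[OF h] .
      have "norm (M *v z) \<le> norm (resid x0 W a S g (emul r h) - resid x0 W a S (emul g r) h) + norm (resid x0 W a S g r - resid x0 W a S (emul g r) eid)"
        unfolding eq by (rule norm_triangle_ineq4)
      also have "\<dots> \<le> norm (resid x0 W a S g (emul r h)) + norm (resid x0 W a S (emul g r) h) + (norm (resid x0 W a S g r) + norm (resid x0 W a S (emul g r) eid))"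
        by (intro add_mono norm_triangle_ineq4)
      also have "\<dots> \<le> ?E1 + ?E2 + (?E1 + ?E2)"
        using resid_le[OF finR rhR, of x0 W a S g] resid_le[OF finR hR, of x0 W a S "emul g r"]
          resid_le[OF finR rR, of x0 W a S g] resid_le[OF finR eidR, of x0 W a S "emul g r"]
        by (intro add_mono) auto
      finally show "norm (M *v z) \<le> 2 * (?E1 + ?E2)" by simp
    qed
    hence "\<kappa> * norm y * (\<Sum>z\<in>Z. norm (M *v z)) \<le> \<kappa> * norm y * (\<Sum>z\<in>Z. 2 * (?E1 + ?E2))"
      using k(1) by (intro mult_left_mono) auto
    also have "\<dots> = \<kappa> * norm y * (real (card Z) * 2 * (?E1 + ?E2))" by simp
    also have "\<dots> = (2 * \<kappa> * real (card Z)) * (norm y * (?E1 + ?E2))" by (simp add: algebra_simps)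
    also have "\<dots> \<le> K * (norm y * (?E1 + ?E2))"
      using E1 E2 by (intro mult_right_mono) (auto simp: K_def)
    also have "\<dots> = K * norm y * SL R x0 W a S [eid, r] g" by (simp add: SLe)
    finally show "norm ((S (emul g r) - S g) *v y) \<le> K * norm y * SL R x0 W a S [eid, r] g" by simp
  qed
  ultimately show ?thesis unfolding chainprop_def using K0 by blast
qed

lemma eact_shift_norm: "orth g \<Longrightarrow> norm (eact (emul g y) x0 - eact g x0) = norm (eact y x0 - x0)"
  by (simp add: eact_emul eact_diff orth_norm')

lemma chain_mul:
  assumes cx: "chainprop x" and cy: "chainprop y" and xG: "x \<in> G" and yG: "y \<in> G"
  shows "chainprop (emul x y)"
proof -
  obtain fs1 K1 where 1: "set fs1 \<subseteq> G" "K1 \<ge> 0" "\<And>W a S g v. g \<in> G \<Longrightarrow>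
      norm (W (emul g x) - W g - S g *v (eact (emul g x) x0 - eact g x0)) \<le> K1 * SL R x0 W a S fs1 g \<and>
      norm ((S (emul g x) - S g) *v v) \<le> K1 * norm v * SL R x0 W a S fs1 g"
    using cx unfolding chainprop_def by blast
  obtain fs2 K2 where 2: "set fs2 \<subseteq> G" "K2 \<ge> 0" "\<And>W a S g v. g \<in> G \<Longrightarrow>
      norm (W (emul g y) - W g - S g *v (eact (emul g y) x0 - eact g x0)) \<le> K2 * SL R x0 W a S fs2 g \<and>
      norm ((S (emul g y) - S g) *v v) \<le> K2 * norm v * SL R x0 W a S fs2 g"
    using cy unfolding chainprop_def by blast
  define c where "c = norm (eact y x0 - x0)"
  define K where "K = K1 + K2 + K1 * c"
  define fs where "fs = fs1 @ map (emul x) fs2"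
  have c0: "c \<ge> 0" by (simp add: c_def)
  have K0: "K \<ge> 0" using 1(2) 2(2) c0 by (simp add: K_def)
  have "\<forall>f\<in>set fs2. emul x f \<in> G" using 2(1) xG G_mul by blast
  hence fsG: "set fs \<subseteq> G" using 1(1) unfolding fs_def by (simp add: image_subset_iff)
  have main: "norm (W (emul g (emul x y)) - W g - S g *v (eact (emul g (emul x y)) x0 - eact g x0)) \<le> K * SL R x0 W a S fs g \<and>
      norm ((S (emul g (emul x y)) - S g) *v v) \<le> K * norm v * SL R x0 W a S fs g"
    if g: "g \<in> G" for W a S g v
  proof -
    have gx: "emul g x \<in> G" using G_mul[OF g xG] .
    let ?s1 = "SL R x0 W a S fs1 g" and ?s2 = "SL R x0 W a S fs2 (emul g x)"
    have s1: "?s1 \<ge> 0" and s2: "?s2 \<ge> 0" by (rule SL_nonneg)+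
    have sfs: "SL R x0 W a S fs g = ?s1 + ?s2" by (simp add: fs_def SL_append SL_map)
    note A = 1(3)[OF g, where W=W and a=a and S=S and v=v] and B = 2(3)[OF gx, where W=W and a=a and S=S and v=v]
    have B': "norm (W (emul g (emul x y)) - W (emul g x) - S (emul g x) *v (eact (emul g (emul x y)) x0 - eact (emul g x) x0)) \<le> K2 * ?s2"
      "norm ((S (emul g (emul x y)) - S (emul g x)) *v v) \<le> K2 * norm v * ?s2"
      using B by (simp_all add: emul_assoc)
    have T3: "norm ((S (emul g x) - S g) *v (eact (emul g (emul x y)) x0 - eact (emul g x) x0)) \<le> K1 * c * ?s1"
      using 1(3)[OF g, where W=W and a=a and S=S and v="eact (emul g (emul x y)) x0 - eact (emul g x) x0"]
        eact_shift_norm[OF G_orth[OF gx], of y] by (simp add: emul_assoc c_def mult_ac)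
    have eq: "W (emul g (emul x y)) - W g - S g *v (eact (emul g (emul x y)) x0 - eact g x0) =
       (W (emul g (emul x y)) - W (emul g x) - S (emul g x) *v (eact (emul g (emul x y)) x0 - eact (emul g x) x0))
       + (S (emul g x) - S g) *v (eact (emul g (emul x y)) x0 - eact (emul g x) x0)
       + (W (emul g x) - W g - S g *v (eact (emul g x) x0 - eact g x0))"
      by (simp add: matrix_vector_mult_diff_distrib matrix_vector_mult_diff_rdistrib algebra_simps)
    have "norm (W (emul g (emul x y)) - W g - S g *v (eact (emul g (emul x y)) x0 - eact g x0)) \<le> K2 * ?s2 + K1 * c * ?s1 + K1 * ?s1"
      unfolding eq by (intro order_trans[OF norm_triangle_ineq] add_mono B'(1) T3 conjunct1[OF A])
    also have "\<dots> \<le> K * SL R x0 W a S fs g"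
      using s1 s2 1(2) 2(2) c0 by (simp add: K_def sfs algebra_simps mult_right_mono add_mono mult_nonneg_nonneg)
    finally have P1: "norm (W (emul g (emul x y)) - W g - S g *v (eact (emul g (emul x y)) x0 - eact g x0)) \<le> K * SL R x0 W a S fs g" .
    have eq2: "(S (emul g (emul x y)) - S g) *v v = (S (emul g (emul x y)) - S (emul g x)) *v v + (S (emul g x) - S g) *v v"
      by (simp add: matrix_vector_mult_diff_rdistrib)
    have "norm ((S (emul g (emul x y)) - S g) *v v) \<le> K2 * norm v * ?s2 + K1 * norm v * ?s1"
      unfolding eq2 by (intro order_trans[OF norm_triangle_ineq] add_mono B'(2) conjunct2[OF A])
    also have "\<dots> \<le> K * norm v * SL R x0 W a S fs g"
      using s1 s2 1(2) 2(2) c0 by (simp add: K_def sfs algebra_simps mult_right_mono add_mono mult_nonneg_nonneg)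
    finally show ?thesis using P1 by simp
  qed
  show ?thesis unfolding chainprop_def using fsG K0 main by blast
qed

lemma chain_inv:
  assumes cx: "chainprop x" and xG: "x \<in> G"
  shows "chainprop (einv x)"
proof -
  obtain fs K where 1: "set fs \<subseteq> G" "K \<ge> 0" "\<And>W a S g v. g \<in> G \<Longrightarrow>
      norm (W (emul g x) - W g - S g *v (eact (emul g x) x0 - eact g x0)) \<le> K * SL R x0 W a S fs g \<and>
      norm ((S (emul g x) - S g) *v v) \<le> K * norm v * SL R x0 W a S fs g"
    using cx unfolding chainprop_def by blast
  have ox: "orth x" using G_orth[OF xG] .
  define c where "c = norm (eact x x0 - x0)"
  define K' where "K' = K + K * c"
  define fs' where "fs' = map (emul (einv x)) fs"
  have c0: "c \<ge> 0" by (simp add: c_def)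
  have K0: "K' \<ge> 0" using 1(2) c0 by (simp add: K'_def)
  have "\<forall>f\<in>set fs. emul (einv x) f \<in> G" using 1(1) G_inv[OF xG] G_mul by blast
  hence fsG: "set fs' \<subseteq> G" unfolding fs'_def by (simp add: image_subset_iff)
  have main: "norm (W (emul g (einv x)) - W g - S g *v (eact (emul g (einv x)) x0 - eact g x0)) \<le> K' * SL R x0 W a S fs' g \<and>
      norm ((S (emul g (einv x)) - S g) *v v) \<le> K' * norm v * SL R x0 W a S fs' g"
    if g: "g \<in> G" for W a S g v
  proof -
    define g' where "g' = emul g (einv x)"
    have g'G: "g' \<in> G" using G_mul[OF g G_inv[OF xG]] by (simp add: g'_def)
    have g'x: "emul g' x = g" using ox by (simp add: g'_def emul_assoc)
    let ?s = "SL R x0 W a S fs g'"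
    have s0: "?s \<ge> 0" by (rule SL_nonneg)
    have sfs: "SL R x0 W a S fs' g = ?s" by (simp add: fs'_def SL_map g'_def)
    note A = 1(3)[OF g'G, where W=W and a=a and S=S, unfolded g'x]
    have T: "norm ((S g - S g') *v (eact g x0 - eact g' x0)) \<le> K * c * ?s"
      using A[where v="eact g x0 - eact g' x0"] eact_shift_norm[OF G_orth[OF g'G], of x] g'x
      by (simp add: c_def mult_ac)
    have eq: "W g' - W g - S g *v (eact g' x0 - eact g x0) =
      - (W g - W g' - S g' *v (eact g x0 - eact g' x0)) + (S g - S g') *v (eact g x0 - eact g' x0)"
      by (simp add: matrix_vector_mult_diff_distrib matrix_vector_mult_diff_rdistrib algebra_simps)
    have "norm (W g' - W g - S g *v (eact g' x0 - eact g x0)) \<le> K * ?s + K * c * ?s"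
      unfolding eq by (intro order_trans[OF norm_triangle_ineq] add_mono T) (use conjunct1[OF A[where v=0]] in \<open>simp only: norm_minus_cancel\<close>)
    also have "\<dots> = K' * SL R x0 W a S fs' g" by (simp add: K'_def sfs algebra_simps)
    finally have P1: "norm (W g' - W g - S g *v (eact g' x0 - eact g x0)) \<le> K' * SL R x0 W a S fs' g" .
    have "norm ((S g' - S g) *v v) = norm ((S g - S g') *v v)"
      by (metis minus_diff_eq norm_minus_cancel matrix_vector_mult_diff_rdistrib)
    also have "\<dots> \<le> K * norm v * ?s" using conjunct2[OF A[where v=v]] .
    also have "\<dots> \<le> K' * norm v * SL R x0 W a S fs' g"
      using s0 1(2) c0 by (simp add: K'_def sfs algebra_simps mult_nonneg_nonneg)
    finally show ?thesis using P1 by (simp add: g'_def)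
  qed
  show ?thesis unfolding chainprop_def using fsG K0 main by blast
qed

lemma chain_all: "x \<in> G \<Longrightarrow> chainprop x"
proof -
  assume "x \<in> G"
  hence "x \<in> generated R'" using genR' by simp
  thus ?thesis
  proof (induction x rule: generated.induct)
    case gen_id thus ?case by (rule chain_id)
  next
    case (gen_base r) thus ?case by (rule chain_base)
  next
    case (gen_mul x y) thus ?case using chain_mul genR' by blast
  next
    case (gen_inv x) thus ?case using chain_inv genR' by blast
  qed
qed

end


definition tr :: "real^'n::finite \<Rightarrow> 'n euc" where "tr b = (mat 1, b)"

lemma tr_comm: "emul (tr b) (emul (tr b') c) = emul (tr b') (emul (tr b) c)"
proof -
  have "emul (tr b) (tr b') = emul (tr b') (tr b)" by (simp add: tr_def emul_def add.commute)
  thus ?thesis by (metis emul_assoc)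
qed

lemma eact_tr: "eact (emul (tr b) g) x0 = eact g x0 + b"
  by (simp add: eact_emul tr_def eact_def add.commute)

definition delta :: "('n::finite euc \<Rightarrow> real^'n) \<Rightarrow> ('n euc \<Rightarrow> real^'n^'n) \<Rightarrow> real^'n \<Rightarrow> 'n euc \<Rightarrow> real^'n" where
  "delta W S b g = W (emul (tr b) g) - W g - S g *v b"

lemma sum_prod4: "(\<Sum>c\<in>C. ((a c::real) - b c) * (x c - y c)) = (\<Sum>c\<in>C. a c * x c) - (\<Sum>c\<in>C. a c * y c) - (\<Sum>c\<in>C. b c * x c) + (\<Sum>c\<in>C. b c * y c)"
proof -
  have "(\<Sum>c\<in>C. (a c - b c) * (x c - y c)) = (\<Sum>c\<in>C. a c * x c - a c * y c - b c * x c + b c * y c)"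
    by (rule sum.cong) (auto simp: algebra_simps)
  also have "\<dots> = (\<Sum>c\<in>C. a c * x c) - (\<Sum>c\<in>C. a c * y c) - (\<Sum>c\<in>C. b c * x c) + (\<Sum>c\<in>C. b c * y c)"
    by (simp add: sum.distrib sum_subtractf)
  finally show ?thesis .
qed

context cosets
begin

lemma korn_identity:
  fixes wj wi :: "'n euc \<Rightarrow> real"
  assumes t1: "tr b \<in> G" and t2: "tr b' \<in> G" and pj: "per wj" and pi: "per wi"
  shows "(\<Sum>c\<in>C. (wj (emul (tr b) c) - wj c) * (wi (emul (tr b') c) - wi c)) =
         (\<Sum>c\<in>C. (wj (emul (tr b') (emul (tr b) c)) - wj (emul (tr b) c)) * (wi (emul (tr b) (emul (tr b') c)) - wi (emul (tr b') c)))"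
proof -
  have t12: "emul (tr b) (tr b') \<in> G" using G_mul[OF t1 t2] .
  have pF1: "per (\<lambda>d. wj d * wi d)" using pj pi by (simp add: per_def)
  have pF2: "per (\<lambda>d. wj (emul (tr b) d) * wi d)"
    using pj pi t1 unfolding per_def by (simp add: emul_assoc[symmetric] G_mul)
  have pF3: "per (\<lambda>d. wj d * wi (emul (tr b') d))"
    using pj pi t2 unfolding per_def by (simp add: emul_assoc[symmetric] G_mul)
  have R1: "(\<Sum>c\<in>C. wj (emul (tr b') (emul (tr b) c)) * wi (emul (tr b) (emul (tr b') c))) = (\<Sum>c\<in>C. wj c * wi c)"
    using reindex_left[OF t12 pF1] by (simp add: emul_assoc tr_comm[of b' b])
  have R2: "(\<Sum>c\<in>C. wj (emul (tr b') (emul (tr b) c)) * wi (emul (tr b') c)) = (\<Sum>c\<in>C. wj (emul (tr b) c) * wi c)"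
    using reindex_left[OF t2 pF2] by (simp add: tr_comm[of b' b])
  have R3: "(\<Sum>c\<in>C. wj (emul (tr b) c) * wi (emul (tr b) (emul (tr b') c))) = (\<Sum>c\<in>C. wj c * wi (emul (tr b') c))"
    using reindex_left[OF t1 pF3] by (simp add: tr_comm[of b' b])
  have L: "(\<Sum>c\<in>C. (wj (emul (tr b) c) - wj c) * (wi (emul (tr b') c) - wi c)) =
     (\<Sum>c\<in>C. wj (emul (tr b) c) * wi (emul (tr b') c)) - (\<Sum>c\<in>C. wj (emul (tr b) c) * wi c)
     - (\<Sum>c\<in>C. wj c * wi (emul (tr b') c)) + (\<Sum>c\<in>C. wj c * wi c)"
    by (rule sum_prod4[where a="\<lambda>c. wj (emul (tr b) c)" and b=wj and x="\<lambda>c. wi (emul (tr b') c)" and y=wi])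
  have R: "(\<Sum>c\<in>C. (wj (emul (tr b') (emul (tr b) c)) - wj (emul (tr b) c)) * (wi (emul (tr b) (emul (tr b') c)) - wi (emul (tr b') c))) =
     (\<Sum>c\<in>C. wj (emul (tr b') (emul (tr b) c)) * wi (emul (tr b) (emul (tr b') c)))
     - (\<Sum>c\<in>C. wj (emul (tr b') (emul (tr b) c)) * wi (emul (tr b') c))
     - (\<Sum>c\<in>C. wj (emul (tr b) c) * wi (emul (tr b) (emul (tr b') c)))
     + (\<Sum>c\<in>C. wj (emul (tr b) c) * wi (emul (tr b') c))"
    by (rule sum_prod4[where a="\<lambda>c. wj (emul (tr b') (emul (tr b) c))" and b="\<lambda>c. wj (emul (tr b) c)" and x="\<lambda>c. wi (emul (tr b) (emul (tr b') c))" and y="\<lambda>c. wi (emul (tr b') c)"])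
  show ?thesis unfolding L R R1 R2 R3 by simp
qed

lemma per_delta:
  assumes t: "tr b \<in> G" and pW: "per W" and pS: "per S"
  shows "per (delta W S b)"
  using assms unfolding per_def delta_def by (simp add: emul_assoc[symmetric] G_mul)

lemma lin_aux: "(p::real) \<le> y \<Longrightarrow> p' \<le> x \<Longrightarrow> r1 \<le> x \<Longrightarrow> r2 \<le> y \<Longrightarrow> t = 2 * x + 2 * y \<Longrightarrow> (p + p') / 2 + 3/2 * (r1 + r2) \<le> t"
  unfolding add_divide_distrib distrib_left by linarith

lemma sqd: "((b::real) - a)\<^sup>2 \<le> 2 * (a\<^sup>2 + b\<^sup>2)"
proof -
  have "2 * (a\<^sup>2 + b\<^sup>2) - (b - a)\<^sup>2 = (a + b)\<^sup>2" by (simp add: power2_eq_square algebra_simps)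
  thus ?thesis by (metis diff_ge_0_iff_ge zero_le_power2)
qed

lemma sq_ineq: "(x::real) * y \<le> (x\<^sup>2 + y\<^sup>2) / 2"
  using sum_squares_bound[of x y] by (simp add: power2_eq_square)

lemma sigma_bound:
  assumes t1: "tr b \<in> G" and t2: "tr b' \<in> G" and pW: "per W" and pS: "per S"
    and sk: "\<And>g. g \<in> G \<Longrightarrow> skew (S g)"
    and beta: "(norm b)\<^sup>2 \<le> \<beta>" "(norm b')\<^sup>2 \<le> \<beta>"
  shows "(\<Sum>c\<in>C. (inner (S c *v b) b')\<^sup>2) \<le> 4 * \<beta> * (\<Sum>c\<in>C. (norm (delta W S b c))\<^sup>2 + (norm (delta W S b' c))\<^sup>2)"
proof -
  define wj where "wj g = inner (W g) b'" for g
  define wi where "wi g = inner (W g) b" for g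
  have pj: "per wj" and pi: "per wi" using pW by (auto simp: per_def wj_def wi_def)
  define \<sigma> where "\<sigma> c = inner (S c *v b) b'" for c
  define \<rho>1 where "\<rho>1 c = inner (delta W S b c) b'" for c
  define \<rho>2 where "\<rho>2 c = inner (delta W S b' c) b" for c
  define D where "D c = (norm (delta W S b c))\<^sup>2 + (norm (delta W S b' c))\<^sup>2" for c
  have b0: "\<beta> \<ge> 0" using beta(1) by (metis order_trans zero_le_power2)
  have Q1: "wj (emul (tr b) c) - wj c = \<sigma> c + \<rho>1 c" for c
    by (simp add: wj_def \<sigma>_def \<rho>1_def delta_def inner_diff_left inner_add_left)
  have Q2: "c \<in> G \<Longrightarrow> wi (emul (tr b') c) - wi c = - \<sigma> c + \<rho>2 c" for c
    using skew_inner[OF sk, of c b' b]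
    by (simp add: wi_def \<sigma>_def \<rho>2_def delta_def inner_diff_left inner_add_left)
  have Q3: "d \<in> G \<Longrightarrow> wj (emul (tr b') d) - wj d = inner (delta W S b' d) b'" for d
    using skew_inner0[OF sk, of d b'] by (simp add: wj_def delta_def inner_diff_left)
  have Q4: "d \<in> G \<Longrightarrow> wi (emul (tr b) d) - wi d = inner (delta W S b d) b" for d
    using skew_inner0[OF sk, of d b] by (simp add: wi_def delta_def inner_diff_left)
  have cs: "(inner x y)\<^sup>2 \<le> (norm x)\<^sup>2 * (norm y)\<^sup>2" for x y :: "real^'n"
    by (metis Cauchy_Schwarz_ineq2 abs_ge_zero norm_ge_zero power_mono power_mult_distrib power2_abs)
  have cs\<beta>: "(inner x y)\<^sup>2 \<le> (norm x)\<^sup>2 * \<beta>" if "(norm y)\<^sup>2 \<le> \<beta>" for x y :: "real^'n"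
    using cs[of x y] mult_left_mono[OF that, of "(norm x)\<^sup>2"] by simp
  define P where "P c = inner (delta W S b' c) b'" for c
  define P' where "P' c = inner (delta W S b c) b" for c
  have pP: "per (\<lambda>c. (P c)\<^sup>2)" and pP': "per (\<lambda>c. (P' c)\<^sup>2)"
    using per_delta[OF t2 pW pS] per_delta[OF t1 pW pS] by (auto simp: per_def P_def P'_def)
  have CGc: "c \<in> C \<Longrightarrow> c \<in> G" for c using CG by blast
  have pw: "(\<sigma> c)\<^sup>2 / 2 \<le> - ((\<sigma> c + \<rho>1 c) * (- \<sigma> c + \<rho>2 c)) + 3/2 * ((\<rho>1 c)\<^sup>2 + (\<rho>2 c)\<^sup>2)" for c
  proof -
    have "\<sigma> c * (\<rho>2 c - \<rho>1 c) \<le> ((\<sigma> c)\<^sup>2 + (\<rho>2 c - \<rho>1 c)\<^sup>2) / 2" by (rule sq_ineq)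
    moreover have "\<rho>1 c * \<rho>2 c \<le> ((\<rho>1 c)\<^sup>2 + (\<rho>2 c)\<^sup>2) / 2" by (rule sq_ineq)
    moreover have "(\<rho>2 c - \<rho>1 c)\<^sup>2 \<le> 2 * ((\<rho>1 c)\<^sup>2 + (\<rho>2 c)\<^sup>2)" by (rule sqd)
    ultimately show ?thesis by (simp add: power2_eq_square algebra_simps)
  qed
  have "(\<Sum>c\<in>C. (\<sigma> c)\<^sup>2 / 2) \<le> (\<Sum>c\<in>C. - ((\<sigma> c + \<rho>1 c) * (- \<sigma> c + \<rho>2 c)) + 3/2 * ((\<rho>1 c)\<^sup>2 + (\<rho>2 c)\<^sup>2))"
    by (intro sum_mono pw)
  also have "\<dots> = (\<Sum>c\<in>C. - ((wj (emul (tr b) c) - wj c) * (wi (emul (tr b') c) - wi c)) + 3/2 * ((\<rho>1 c)\<^sup>2 + (\<rho>2 c)\<^sup>2))"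
    by (intro sum.cong refl) (simp add: Q1 Q2 CGc)
  also have "\<dots> = - (\<Sum>c\<in>C. (wj (emul (tr b) c) - wj c) * (wi (emul (tr b') c) - wi c)) + (\<Sum>c\<in>C. 3/2 * ((\<rho>1 c)\<^sup>2 + (\<rho>2 c)\<^sup>2))"
    by (simp only: sum.distrib sum_negf)
  also have "(\<Sum>c\<in>C. (wj (emul (tr b) c) - wj c) * (wi (emul (tr b') c) - wi c)) =
      (\<Sum>c\<in>C. P (emul (tr b) c) * P' (emul (tr b') c))"
    unfolding korn_identity[OF t1 t2 pj pi]
    using Q3 Q4 CGc G_mul[OF t1] G_mul[OF t2] by (intro sum.cong) (simp_all add: P_def P'_def)
  also have "- (\<Sum>c\<in>C. P (emul (tr b) c) * P' (emul (tr b') c)) \<le> (\<Sum>c\<in>C. ((P (emul (tr b) c))\<^sup>2 + (P' (emul (tr b') c))\<^sup>2) / 2)"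
  proof -
    have "- (\<Sum>c\<in>C. P (emul (tr b) c) * P' (emul (tr b') c)) = (\<Sum>c\<in>C. (- P (emul (tr b) c)) * P' (emul (tr b') c))"
      by (simp add: sum_negf)
    also have "\<dots> \<le> (\<Sum>c\<in>C. ((- P (emul (tr b) c))\<^sup>2 + (P' (emul (tr b') c))\<^sup>2) / 2)"
      by (intro sum_mono sq_ineq)
    finally show ?thesis by simp
  qed
  also have "(\<Sum>c\<in>C. ((P (emul (tr b) c))\<^sup>2 + (P' (emul (tr b') c))\<^sup>2) / 2) = (\<Sum>c\<in>C. ((P c)\<^sup>2 + (P' c)\<^sup>2) / 2)"
  proof -
    have "(\<Sum>c\<in>C. ((P (emul (tr b) c))\<^sup>2 + (P' (emul (tr b') c))\<^sup>2) / 2) =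
       ((\<Sum>c\<in>C. (P (emul (tr b) c))\<^sup>2) + (\<Sum>c\<in>C. (P' (emul (tr b') c))\<^sup>2)) / 2"
      by (simp only: sum_divide_distrib[symmetric] sum.distrib)
    also have "\<dots> = ((\<Sum>c\<in>C. (P c)\<^sup>2) + (\<Sum>c\<in>C. (P' c)\<^sup>2)) / 2"
      using reindex_left[OF t1 pP] reindex_left[OF t2 pP'] by simp
    also have "\<dots> = (\<Sum>c\<in>C. ((P c)\<^sup>2 + (P' c)\<^sup>2) / 2)" by (simp only: sum_divide_distrib[symmetric] sum.distrib)
    finally show ?thesis .
  qed
  finally have main: "(\<Sum>c\<in>C. (\<sigma> c)\<^sup>2 / 2) \<le> (\<Sum>c\<in>C. ((P c)\<^sup>2 + (P' c)\<^sup>2) / 2) + (\<Sum>c\<in>C. 3/2 * ((\<rho>1 c)\<^sup>2 + (\<rho>2 c)\<^sup>2))"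
    by simp
  have pt: "((P c)\<^sup>2 + (P' c)\<^sup>2) / 2 + 3/2 * ((\<rho>1 c)\<^sup>2 + (\<rho>2 c)\<^sup>2) \<le> 2 * \<beta> * D c" for c
  proof -
    have "(P c)\<^sup>2 \<le> (norm (delta W S b' c))\<^sup>2 * \<beta>" unfolding P_def by (rule cs\<beta>[OF beta(2)])
    moreover have "(P' c)\<^sup>2 \<le> (norm (delta W S b c))\<^sup>2 * \<beta>" unfolding P'_def by (rule cs\<beta>[OF beta(1)])
    moreover have "(\<rho>1 c)\<^sup>2 \<le> (norm (delta W S b c))\<^sup>2 * \<beta>" unfolding \<rho>1_def by (rule cs\<beta>[OF beta(2)])
    moreover have "(\<rho>2 c)\<^sup>2 \<le> (norm (delta W S b' c))\<^sup>2 * \<beta>" unfolding \<rho>2_def by (rule cs\<beta>[OF beta(1)])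
    moreover have "2 * \<beta> * D c = 2 * ((norm (delta W S b c))\<^sup>2 * \<beta>) + 2 * ((norm (delta W S b' c))\<^sup>2 * \<beta>)"
      by (simp add: D_def algebra_simps)
    ultimately show ?thesis by (rule lin_aux)
  qed
  have "(\<Sum>c\<in>C. (\<sigma> c)\<^sup>2) = 2 * (\<Sum>c\<in>C. (\<sigma> c)\<^sup>2 / 2)" by (simp only: sum_divide_distrib[symmetric])
  also have "\<dots> \<le> 2 * ((\<Sum>c\<in>C. ((P c)\<^sup>2 + (P' c)\<^sup>2) / 2) + (\<Sum>c\<in>C. 3/2 * ((\<rho>1 c)\<^sup>2 + (\<rho>2 c)\<^sup>2)))"
    using main by simp
  also have "\<dots> = 2 * (\<Sum>c\<in>C. ((P c)\<^sup>2 + (P' c)\<^sup>2) / 2 + 3/2 * ((\<rho>1 c)\<^sup>2 + (\<rho>2 c)\<^sup>2))"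
    by (simp add: sum.distrib)
  also have "\<dots> \<le> 2 * (\<Sum>c\<in>C. 2 * \<beta> * D c)" by (intro mult_left_mono sum_mono pt) auto
  also have "\<dots> = 4 * \<beta> * (\<Sum>c\<in>C. D c)" by (simp add: sum_distrib_left mult.assoc)
  finally show ?thesis by (simp add: \<sigma>_def D_def)
qed

end


lemma sq_sum_le: "((x::real) + y)\<^sup>2 \<le> 2 * x\<^sup>2 + 2 * y\<^sup>2"
proof -
  have "2 * x\<^sup>2 + 2 * y\<^sup>2 - (x + y)\<^sup>2 = (x - y)\<^sup>2" by (simp add: power2_eq_square algebra_simps)
  thus ?thesis by (metis diff_ge_0_iff_ge zero_le_power2)
qed

lemma eact_shift_norm_g: "orth g \<Longrightarrow> norm (eact (emul g y) x0 - eact g x0) = norm (eact y x0 - x0)"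
  by (simp add: eact_emul eact_diff orth_norm')

context cosets
begin

lemma per_Eloc:
  assumes RG: "R \<subseteq> G" and pW: "per W" and pa: "per a" and pS: "per S"
  shows "per (Eloc R x0 W a S)"
  unfolding per_def
proof (intro ballI)
  fix g t assume g: "g \<in> G" and t: "t \<in> H"
  have "resid x0 W a S (emul g t) h = resid x0 W a S g h" if h: "h \<in> R" for h
  proof -
    have hG: "h \<in> G" using h RG by blast
    have oh: "orth h" using G_orth[OF hG] .
    define k where "k = emul (emul (einv h) t) h"
    have kH: "k \<in> H" using H_conj[OF G_inv[OF hG] t] oh by (simp add: k_def)
    have e1: "emul (emul g h) k = emul (emul g t) h" using oh by (simp add: k_def emul_assoc)
    have W1: "W (emul (emul g t) h) = W (emul g h)"
      using pW G_mul[OF g hG] kH unfolding per_def e1[symmetric] by blast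
    have ft: "fst t = mat 1" using t by (rule TN_fst)
    have p1: "eact (emul (emul g t) h) x0 - eact (emul g t) x0 = eact (emul g h) x0 - eact g x0"
      by (simp add: eact_emul eact_diff ft)
    have "a (emul g t) = a g" "S (emul g t) = S g" using pa pS g t unfolding per_def by auto
    thus ?thesis unfolding resid_def using W1 p1 by simp
  qed
  thus "Eloc R x0 W a S (emul g t) = Eloc R x0 W a S g" unfolding Eloc_def by simp
qed

lemma assembly:
  fixes W a :: "'n euc \<Rightarrow> real^'n" and S :: "'n euc \<Rightarrow> real^'n^'n" and B :: "(real^'n) set"
  assumes pW: "per W" and pa: "per a" and pS: "per S" and sk: "\<And>g. g \<in> G \<Longrightarrow> skew (S g)"
    and finR: "finite R" and RG: "R \<subseteq> G" and eidR: "eid \<in> R"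
    and finB: "finite B" and trB: "\<And>b. b \<in> B \<Longrightarrow> tr b \<in> G"
    and kB: "\<kappa>B \<ge> 0" "\<And>(M::real^'n^'n) y. norm (M *v y) \<le> \<kappa>B * norm y * (\<Sum>b\<in>B. norm (M *v b))"
    and k3: "\<kappa>3 \<ge> 0" "\<And>v::real^'n. norm v \<le> \<kappa>3 * (\<Sum>b\<in>B. \<bar>inner v b\<bar>)"
    and beta: "\<And>b. b \<in> B \<Longrightarrow> (norm b)\<^sup>2 \<le> \<beta>"
    and Kd: "Kd \<ge> 0" "\<And>b. b \<in> B \<Longrightarrow> (\<Sum>c\<in>C. (norm (delta W S b c))\<^sup>2) \<le> Kd * (\<Sum>c\<in>C. Eloc R x0 W a S c)"
    and D0: "D0 \<ge> 0" "\<And>h. h \<in> R \<Longrightarrow> norm (eact h x0 - x0) \<le> D0"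
  shows "(\<Sum>c\<in>C. \<Sum>h\<in>R. (norm (W (emul c h) - W c))\<^sup>2) \<le>
     real (card R) * (8 + 2 * (\<kappa>B * D0 * \<kappa>3)\<^sup>2 * (real (card B))^4 * 8 * \<beta> * Kd) * (\<Sum>c\<in>C. Eloc R x0 W a S c)"
proof -
  let ?E = "\<lambda>c. Eloc R x0 W a S c"
  let ?SE = "\<Sum>c\<in>C. ?E c"
  define \<kappa> where "\<kappa> = \<kappa>B * D0 * \<kappa>3"
  have k0: "\<kappa> \<ge> 0" using kB(1) k3(1) D0(1) by (simp add: \<kappa>_def)
  define \<sigma> where "\<sigma> c bb = inner (S c *v fst bb) (snd bb)" for c bb
  define \<Psi> where "\<Psi> c = (\<Sum>bb\<in>B \<times> B. \<bar>\<sigma> c bb\<bar>)" for c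
  have SE0: "?SE \<ge> 0" by (intro sum_nonneg) auto
  have b0: "\<beta> \<ge> 0" if "B \<noteq> {}" using beta that by (metis all_not_in_conv order_trans zero_le_power2)
  have pt: "norm (W (emul c h) - W c) \<le> 2 * sqrt (?E c) + \<kappa> * \<Psi> c" if c: "c \<in> G" and h: "h \<in> R" for c h
  proof -
    have eq: "W (emul c h) - W c = (resid x0 W a S c h - resid x0 W a S c eid) + S c *v (eact (emul c h) x0 - eact c x0)"
      by (simp add: resid_def)
    have y: "norm (eact (emul c h) x0 - eact c x0) \<le> D0"
      using D0(2)[OF h] eact_shift_norm_g[OF G_orth[OF c], of h x0] by simp
    have "norm (S c *v (eact (emul c h) x0 - eact c x0)) \<le> \<kappa>B * norm (eact (emul c h) x0 - eact c x0) * (\<Sum>b\<in>B. norm (S c *v b))"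
      by (rule kB(2))
    also have "\<dots> \<le> \<kappa>B * D0 * (\<Sum>b\<in>B. norm (S c *v b))"
      using y kB(1) by (intro mult_right_mono mult_left_mono) (auto intro: sum_nonneg)
    also have "(\<Sum>b\<in>B. norm (S c *v b)) \<le> (\<Sum>b\<in>B. \<kappa>3 * (\<Sum>b'\<in>B. \<bar>inner (S c *v b) b'\<bar>))"
      by (intro sum_mono k3(2))
    also have "\<dots> = \<kappa>3 * \<Psi> c"
      by (simp add: \<Psi>_def \<sigma>_def sum_distrib_left sum.cartesian_product case_prod_beta)
    finally have "norm (S c *v (eact (emul c h) x0 - eact c x0)) \<le> \<kappa>B * D0 * (\<kappa>3 * \<Psi> c)"
      using kB(1) D0(1) by (simp add: mult_left_mono)
    hence nS: "norm (S c *v (eact (emul c h) x0 - eact c x0)) \<le> \<kappa> * \<Psi> c" by (simp add: \<kappa>_def mult_ac)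
    have "norm (W (emul c h) - W c) \<le> norm (resid x0 W a S c h - resid x0 W a S c eid) + norm (S c *v (eact (emul c h) x0 - eact c x0))"
      unfolding eq by (rule norm_triangle_ineq)
    also have "\<dots> \<le> (norm (resid x0 W a S c h) + norm (resid x0 W a S c eid)) + \<kappa> * \<Psi> c"
      by (intro add_mono norm_triangle_ineq4 nS)
    also have "\<dots> \<le> (sqrt (?E c) + sqrt (?E c)) + \<kappa> * \<Psi> c"
      by (intro add_mono resid_le[OF finR h] resid_le[OF finR eidR] order_refl)
    finally show ?thesis by simp
  qed
  have pt2: "(\<Sum>h\<in>R. (norm (W (emul c h) - W c))\<^sup>2) \<le> real (card R) * (8 * ?E c + 2 * \<kappa>\<^sup>2 * (\<Psi> c)\<^sup>2)"
    if c: "c \<in> G" for c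
  proof -
    have "(\<Sum>h\<in>R. (norm (W (emul c h) - W c))\<^sup>2) \<le> (\<Sum>h\<in>R. 8 * ?E c + 2 * \<kappa>\<^sup>2 * (\<Psi> c)\<^sup>2)"
    proof (intro sum_mono)
      fix h assume h: "h \<in> R"
      have "(norm (W (emul c h) - W c))\<^sup>2 \<le> (2 * sqrt (?E c) + \<kappa> * \<Psi> c)\<^sup>2"
        using pt[OF c h] by (intro power_mono) auto
      also have "\<dots> \<le> 2 * (2 * sqrt (?E c))\<^sup>2 + 2 * (\<kappa> * \<Psi> c)\<^sup>2" by (rule sq_sum_le)
      also have "\<dots> = 8 * ?E c + 2 * \<kappa>\<^sup>2 * (\<Psi> c)\<^sup>2" by (simp add: power_mult_distrib)
      finally show "(norm (W (emul c h) - W c))\<^sup>2 \<le> 8 * ?E c + 2 * \<kappa>\<^sup>2 * (\<Psi> c)\<^sup>2" .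
    qed
    thus ?thesis by simp
  qed
  have Psi2: "(\<Psi> c)\<^sup>2 \<le> real (card B)^2 * (\<Sum>bb\<in>B \<times> B. (\<sigma> c bb)\<^sup>2)" for c
  proof -
    have "(\<Psi> c)\<^sup>2 \<le> (\<Sum>bb\<in>B \<times> B. (\<bar>\<sigma> c bb\<bar>)\<^sup>2) * real (card (B \<times> B))"
      unfolding \<Psi>_def by (rule sum_squared_le_sum_of_squares)
    thus ?thesis by (simp add: card_cartesian_product power2_eq_square mult_ac)
  qed
  have sig: "(\<Sum>c\<in>C. (\<sigma> c bb)\<^sup>2) \<le> 8 * \<beta> * Kd * ?SE" if bb: "bb \<in> B \<times> B" for bb
  proof -
    obtain b b' where bb': "bb = (b, b')" "b \<in> B" "b' \<in> B" using bb by auto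
    have bne: "B \<noteq> {}" using bb'(2) by blast
    have "(\<Sum>c\<in>C. (\<sigma> c bb)\<^sup>2) \<le> 4 * \<beta> * (\<Sum>c\<in>C. (norm (delta W S b c))\<^sup>2 + (norm (delta W S b' c))\<^sup>2)"
      unfolding \<sigma>_def bb'(1) fst_conv snd_conv
      by (rule sigma_bound[OF trB[OF bb'(2)] trB[OF bb'(3)] pW pS sk beta[OF bb'(2)] beta[OF bb'(3)]])
    also have "\<dots> = 4 * \<beta> * ((\<Sum>c\<in>C. (norm (delta W S b c))\<^sup>2) + (\<Sum>c\<in>C. (norm (delta W S b' c))\<^sup>2))"
      by (simp add: sum.distrib)
    also have "\<dots> \<le> 4 * \<beta> * (Kd * ?SE + Kd * ?SE)"
      using b0[OF bne] by (intro mult_left_mono add_mono Kd(2) bb') auto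
    finally show ?thesis by simp
  qed
  have sumPsi: "(\<Sum>c\<in>C. (\<Psi> c)\<^sup>2) \<le> real (card B)^4 * 8 * \<beta> * Kd * ?SE"
  proof -
    have "(\<Sum>c\<in>C. (\<Psi> c)\<^sup>2) \<le> (\<Sum>c\<in>C. real (card B)^2 * (\<Sum>bb\<in>B \<times> B. (\<sigma> c bb)\<^sup>2))"
      by (intro sum_mono Psi2)
    also have "\<dots> = real (card B)^2 * (\<Sum>bb\<in>B \<times> B. \<Sum>c\<in>C. (\<sigma> c bb)\<^sup>2)"
      by (simp add: sum_distrib_left sum.swap[of _ C])
    also have "\<dots> \<le> real (card B)^2 * (\<Sum>bb\<in>B \<times> B. 8 * \<beta> * Kd * ?SE)"
      by (intro mult_left_mono sum_mono sig) auto
    also have "\<dots> = real (card B)^4 * 8 * \<beta> * Kd * ?SE"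
      by (simp add: card_cartesian_product power2_eq_square power4_eq_xxxx mult_ac)
    finally show ?thesis .
  qed
  have "(\<Sum>c\<in>C. \<Sum>h\<in>R. (norm (W (emul c h) - W c))\<^sup>2) \<le> (\<Sum>c\<in>C. real (card R) * (8 * ?E c + 2 * \<kappa>\<^sup>2 * (\<Psi> c)\<^sup>2))"
    using CG by (intro sum_mono pt2) blast
  also have "\<dots> = real (card R) * (8 * ?SE + 2 * \<kappa>\<^sup>2 * (\<Sum>c\<in>C. (\<Psi> c)\<^sup>2))"
    by (simp add: sum.distrib sum_distrib_left[symmetric])
  also have "\<dots> \<le> real (card R) * (8 * ?SE + 2 * \<kappa>\<^sup>2 * (real (card B)^4 * 8 * \<beta> * Kd * ?SE))"
    by (intro mult_left_mono add_mono order_refl sumPsi) auto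
  also have "\<dots> = real (card R) * (8 + 2 * \<kappa>\<^sup>2 * real (card B)^4 * 8 * \<beta> * Kd) * ?SE"
    by (simp add: algebra_simps)
  finally show ?thesis by (simp add: \<kappa>_def)
qed

end


lemma tr_conj: "orth g \<Longrightarrow> emul g (mat 1, transpose (fst g) *v b) = emul (tr b) g"
proof -
  assume o: "orth g"
  have "fst g *v (transpose (fst g) *v b) = b"
    using orthD(2)[OF o] by (metis matrix_vector_mul_assoc matrix_vector_mul_lid)
  thus ?thesis by (simp add: emul_def tr_def add.commute)
qed

lemma conj_in:
  assumes "euc_subgroup G" "g \<in> G" "tr b \<in> G"
  shows "(mat 1, transpose (fst g) *v b) \<in> G"
proof -
  have o: "orth g" using sub_orth assms by blast
  have "emul (einv g) (emul (tr b) g) = (mat 1, transpose (fst g) *v b)"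
    using tr_conj[OF o, of b] o by (metis einv_cancel(3))
  moreover have "emul (einv g) (emul (tr b) g) \<in> G"
    using assms sub_mul sub_inv by metis
  ultimately show ?thesis by simp
qed

locale kornsetup = chainsetup G R R' R'' x0
  for G :: "'n::finite euc set" and R R' R'' x0 +
  fixes B :: "(real^'n) set"
  assumes finB: "finite B" and spanB: "span B = UNIV" and trB: "\<And>b. b \<in> B \<Longrightarrow> tr b \<in> G"
    and finrot: "finite (fst ` G)" and RG: "R \<subseteq> G"
begin

definition X :: "'n euc set" where "X = (\<lambda>(b, A). (mat 1, transpose A *v b)) ` (B \<times> fst ` G)"

lemma finX: "finite X" unfolding X_def using finB finrot by simp

lemma XG: "X \<subseteq> G"
  unfolding X_def using conj_in[OF subG] trB by auto

lemma Kd_exists: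
  "\<exists>Kd\<ge>0. \<forall>N C W a S. normal_subgroup (TN G N) G \<longrightarrow> coset_reps G N C \<longrightarrow> finite C \<longrightarrow>
     cosets.per G N W \<longrightarrow> cosets.per G N a \<longrightarrow> cosets.per G N S \<longrightarrow>
     (\<forall>b\<in>B. (\<Sum>c\<in>C. (norm (delta W S b c))\<^sup>2) \<le> Kd * (\<Sum>c\<in>C. Eloc R x0 W a S c))"
proof -
  have "\<forall>x\<in>X. chainprop x" using XG chain_all by blast
  hence "\<forall>x\<in>X. \<exists>fs. \<exists>K. set fs \<subseteq> G \<and> K \<ge> 0 \<and>
   (\<forall>W a S g y. g \<in> G \<longrightarrow>
      norm (W (emul g x) - W g - S g *v (eact (emul g x) x0 - eact g x0)) \<le> K * SL R x0 W a S fs g \<and>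
      norm ((S (emul g x) - S g) *v y) \<le> K * norm y * SL R x0 W a S fs g)"
    unfolding chainprop_def by blast
  then obtain fsf where "\<forall>x\<in>X. \<exists>K. set (fsf x) \<subseteq> G \<and> K \<ge> 0 \<and>
   (\<forall>W a S g y. g \<in> G \<longrightarrow>
      norm (W (emul g x) - W g - S g *v (eact (emul g x) x0 - eact g x0)) \<le> K * SL R x0 W a S (fsf x) g \<and>
      norm ((S (emul g x) - S g) *v y) \<le> K * norm y * SL R x0 W a S (fsf x) g)"
    by (rule bchoice[THEN exE]) blast
  then obtain Kf where F: "\<forall>x\<in>X. set (fsf x) \<subseteq> G \<and> Kf x \<ge> 0 \<and>
   (\<forall>W a S g y. g \<in> G \<longrightarrow>
      norm (W (emul g x) - W g - S g *v (eact (emul g x) x0 - eact g x0)) \<le> Kf x * SL R x0 W a S (fsf x) g \<and>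
      norm ((S (emul g x) - S g) *v y) \<le> Kf x * norm y * SL R x0 W a S (fsf x) g)"
    by (rule bchoice[THEN exE]) blast
  define Kd where "Kd = (\<Sum>x\<in>X. (Kf x)\<^sup>2 * (real (length (fsf x)))\<^sup>2)"
  have Kd0: "Kd \<ge> 0" unfolding Kd_def by (intro sum_nonneg) auto
  have main: "(\<Sum>c\<in>C. (norm (delta W S b c))\<^sup>2) \<le> Kd * (\<Sum>c\<in>C. Eloc R x0 W a S c)"
    if nH: "normal_subgroup (TN G N) G" and cr: "coset_reps G N C" and fC: "finite C"
      and pW: "cosets.per G N W" and pa: "cosets.per G N a" and pS: "cosets.per G N S" and b: "b \<in> B"
    for N C W a S b
  proof -
    interpret cosets G N C using subG nH cr fC by unfold_locales
    let ?E = "Eloc R x0 W a S"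
    have pE: "per ?E" by (rule per_Eloc[OF RG pW pa pS])
    define \<Phi> where "\<Phi> x g = (Kf x)\<^sup>2 * real (length (fsf x)) * sum_list (map (\<lambda>f. ?E (emul g f)) (fsf x))" for x g
    have \<Phi>0: "\<Phi> x g \<ge> 0" if "x \<in> X" for x g
      unfolding \<Phi>_def by (intro mult_nonneg_nonneg sum_list_nonneg') auto
    have pt: "(norm (delta W S b g))\<^sup>2 \<le> (\<Sum>x\<in>X. \<Phi> x g)" if g: "g \<in> G" for g
    proof -
      define x :: "'n euc" where "x = (mat 1, transpose (fst g) *v b)"
      have xX: "x \<in> X" unfolding X_def x_def using b g by force
      have og: "orth g" using G_orth[OF g] .
      have gx: "emul g x = emul (tr b) g" unfolding x_def by (rule tr_conj[OF og])
      have dl: "delta W S b g = W (emul g x) - W g - S g *v (eact (emul g x) x0 - eact g x0)"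
        by (simp add: delta_def gx eact_tr)
      have Fx: "set (fsf x) \<subseteq> G" "Kf x \<ge> 0"
        "norm (W (emul g x) - W g - S g *v (eact (emul g x) x0 - eact g x0)) \<le> Kf x * SL R x0 W a S (fsf x) g"
        using F xX g by blast+
      have sl0: "SL R x0 W a S (fsf x) g \<ge> 0" by (rule SL_nonneg)
      have "(norm (delta W S b g))\<^sup>2 \<le> (Kf x * SL R x0 W a S (fsf x) g)\<^sup>2"
        unfolding dl by (intro power_mono Fx(3)) auto
      also have "\<dots> = (Kf x)\<^sup>2 * (SL R x0 W a S (fsf x) g)\<^sup>2" by (simp add: power_mult_distrib)
      also have "(SL R x0 W a S (fsf x) g)\<^sup>2 \<le> real (length (fsf x)) * sum_list (map (\<lambda>f. ?E (emul g f)) (fsf x))"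
        using sum_list_sq[of "\<lambda>f. sqrt (?E (emul g f))" "fsf x"] by (simp add: SL_def)
      hence "(Kf x)\<^sup>2 * (SL R x0 W a S (fsf x) g)\<^sup>2 \<le> \<Phi> x g"
        unfolding \<Phi>_def by (simp add: mult_left_mono mult.assoc)
      also have "\<Phi> x g \<le> (\<Sum>x\<in>X. \<Phi> x g)"
        by (rule member_le_sum[OF xX]) (use \<Phi>0 finX in auto)
      finally show ?thesis .
    qed
    have cs: "(\<Sum>c\<in>C. \<Phi> x c) = (Kf x)\<^sup>2 * (real (length (fsf x)))\<^sup>2 * (\<Sum>c\<in>C. ?E c)" if x: "x \<in> X" for x
    proof -
      have fG: "set (fsf x) \<subseteq> G" using F x by blast
      have "(\<Sum>c\<in>C. \<Phi> x c) = (Kf x)\<^sup>2 * real (length (fsf x)) * (\<Sum>c\<in>C. sum_list (map (\<lambda>f. ?E (emul c f)) (fsf x)))"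
        unfolding \<Phi>_def by (simp add: sum_distrib_left)
      also have "(\<Sum>c\<in>C. sum_list (map (\<lambda>f. ?E (emul c f)) (fsf x))) = sum_list (map (\<lambda>f. \<Sum>c\<in>C. ?E (emul c f)) (fsf x))"
        by (rule sum_list_sum_swap)
      also have "\<dots> = sum_list (map (\<lambda>f. \<Sum>c\<in>C. ?E c) (fsf x))"
        using fG by (intro arg_cong[where f=sum_list] map_cong refl reindex_right[OF _ pE]) auto
      also have "\<dots> = real (length (fsf x)) * (\<Sum>c\<in>C. ?E c)" by (simp add: sum_list_triv)
      finally show ?thesis by (simp add: power2_eq_square mult_ac)
    qed
    have "(\<Sum>c\<in>C. (norm (delta W S b c))\<^sup>2) \<le> (\<Sum>c\<in>C. \<Sum>x\<in>X. \<Phi> x c)"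
      using CG by (intro sum_mono pt) blast
    also have "\<dots> = (\<Sum>x\<in>X. \<Sum>c\<in>C. \<Phi> x c)" by (rule sum.swap)
    also have "\<dots> = (\<Sum>x\<in>X. (Kf x)\<^sup>2 * (real (length (fsf x)))\<^sup>2 * (\<Sum>c\<in>C. ?E c))"
      by (intro sum.cong refl cs)
    also have "\<dots> = Kd * (\<Sum>c\<in>C. ?E c)" by (simp add: Kd_def sum_distrib_right)
    finally show ?thesis .
  qed
  show ?thesis using Kd0 main by blast
qed

lemma global_korn:
  "\<exists>K\<ge>0. \<forall>N C W a S. normal_subgroup (TN G N) G \<longrightarrow> coset_reps G N C \<longrightarrow> finite C \<longrightarrow>
     cosets.per G N W \<longrightarrow> cosets.per G N a \<longrightarrow> cosets.per G N S \<longrightarrow> (\<forall>g\<in>G. skew (S g)) \<longrightarrow>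
     (\<Sum>c\<in>C. \<Sum>h\<in>R. (norm (W (emul c h) - W c))\<^sup>2) \<le> K * (\<Sum>c\<in>C. Eloc R x0 W a S c)"
proof -
  obtain Kd where Kd: "Kd \<ge> 0" "\<And>N C W a S. normal_subgroup (TN G N) G \<Longrightarrow> coset_reps G N C \<Longrightarrow> finite C \<Longrightarrow>
     cosets.per G N W \<Longrightarrow> cosets.per G N a \<Longrightarrow> cosets.per G N S \<Longrightarrow>
     (\<forall>b\<in>B. (\<Sum>c\<in>C. (norm (delta W S b c))\<^sup>2) \<le> Kd * (\<Sum>c\<in>C. Eloc R x0 W a S c))"
    using Kd_exists by blast
  obtain \<kappa>B where kB: "\<kappa>B \<ge> 0" "\<And>(M::real^'n^'n) y. norm (M *v y) \<le> \<kappa>B * norm y * (\<Sum>b\<in>B. norm (M *v b))"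
    using mat_bound[OF finB spanB] by blast
  obtain \<kappa>3 where k3: "\<kappa>3 \<ge> 0" "\<And>v::real^'n. norm v \<le> \<kappa>3 * (\<Sum>b\<in>B. \<bar>inner v b\<bar>)"
    using vec_bound[OF finB spanB] by blast
  define \<beta> where "\<beta> = (\<Sum>b\<in>B. (norm b)\<^sup>2)"
  have beta: "\<And>b. b \<in> B \<Longrightarrow> (norm b)\<^sup>2 \<le> \<beta>"
    unfolding \<beta>_def by (rule member_le_sum) (auto simp: finB)
  have b0: "\<beta> \<ge> 0" unfolding \<beta>_def by (intro sum_nonneg) auto
  define D0 where "D0 = (\<Sum>h\<in>R. norm (eact h x0 - x0))"
  have D0: "D0 \<ge> 0" "\<And>h. h \<in> R \<Longrightarrow> norm (eact h x0 - x0) \<le> D0"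
    unfolding D0_def by (auto intro: sum_nonneg member_le_sum finR)
  define K where "K = real (card R) * (8 + 2 * (\<kappa>B * D0 * \<kappa>3)\<^sup>2 * (real (card B))^4 * 8 * \<beta> * Kd)"
  have K0: "K \<ge> 0" unfolding K_def using b0 Kd(1) by (intro mult_nonneg_nonneg add_nonneg_nonneg) auto
  have "(\<Sum>c\<in>C. \<Sum>h\<in>R. (norm (W (emul c h) - W c))\<^sup>2) \<le> K * (\<Sum>c\<in>C. Eloc R x0 W a S c)"
    if nH: "normal_subgroup (TN G N) G" and cr: "coset_reps G N C" and fC: "finite C"
      and pW: "cosets.per G N W" and pa: "cosets.per G N a" and pS: "cosets.per G N S"
      and sk: "\<forall>g\<in>G. skew (S g)"
    for N C W a S
  proof -
    interpret cosets G N C using subG nH cr fC by unfold_locales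
    show ?thesis unfolding K_def
      by (rule assembly[OF pW pa pS _ finR RG eidR finB trB kB k3 beta Kd(1) _ D0])
         (use sk Kd(2)[OF nH cr fC pW pa pS] in auto)
  qed
  thus ?thesis using K0 by blast
qed

end


definition vals :: "'n::finite euc set \<Rightarrow> ('n euc \<Rightarrow> real^'n) \<Rightarrow> ('n euc \<Rightarrow> real^'n) set \<Rightarrow> real set" where
  "vals R v U = {sqrt (\<Sum>h\<in>R. (norm (v h - w h))\<^sup>2) | w. w \<in> U}"

lemma distR_vals: "distR R v U = Inf (vals R v U)"
  by (simp add: distR_def vals_def)

lemma vals_bdd: "bdd_below (vals R v U)"
  unfolding vals_def by (rule bdd_belowI[of _ 0]) (auto simp: sum_nonneg)

lemma vals_ne: "U \<noteq> {} \<Longrightarrow> vals R v U \<noteq> {}"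
  unfolding vals_def by auto

lemma distR_nonneg: "U \<noteq> {} \<Longrightarrow> 0 \<le> distR R v U"
  unfolding distR_vals by (rule cInf_greatest[OF vals_ne]) (auto simp: vals_def sum_nonneg)

lemma distR_le: "w \<in> U \<Longrightarrow> distR R v U \<le> sqrt (\<Sum>h\<in>R. (norm (v h - w h))\<^sup>2)"
  unfolding distR_vals by (rule cInf_lower[OF _ vals_bdd]) (auto simp: vals_def)

lemma distR_ge: "U \<noteq> {} \<Longrightarrow> (\<And>w. w \<in> U \<Longrightarrow> d \<le> sqrt (\<Sum>h\<in>R. (norm (v h - w h))\<^sup>2)) \<Longrightarrow> d \<le> distR R v U"
  unfolding distR_vals by (rule cInf_greatest[OF vals_ne]) (auto simp: vals_def)

lemma distR_approx:
  assumes U: "U \<noteq> {}" and e: "e > 0"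
  shows "\<exists>w\<in>U. (\<Sum>h\<in>R. (norm (v h - w h))\<^sup>2) < (distR R v U)\<^sup>2 + e"
proof -
  let ?d = "distR R v U"
  have d0: "?d \<ge> 0" by (rule distR_nonneg[OF U])
  have "?d < sqrt (?d\<^sup>2 + e)" using d0 e
    by (metis less_add_same_cancel1 real_sqrt_abs abs_of_nonneg real_sqrt_less_mono)
  hence "Inf (vals R v U) < sqrt (?d\<^sup>2 + e)" by (simp add: distR_vals)
  then obtain x where "x \<in> vals R v U" "x < sqrt (?d\<^sup>2 + e)"
    using cInf_less_iff[OF vals_ne[OF U] vals_bdd] by blast
  then obtain w where w: "w \<in> U" "sqrt (\<Sum>h\<in>R. (norm (v h - w h))\<^sup>2) < sqrt (?d\<^sup>2 + e)"
    unfolding vals_def by blast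
  hence "(\<Sum>h\<in>R. (norm (v h - w h))\<^sup>2) < ?d\<^sup>2 + e" by simp
  thus ?thesis using w(1) by blast
qed

lemma Uiso00_ne: "(\<lambda>_. 0) \<in> Uiso00 x0 R"
  unfolding Uiso00_def by auto

lemma zero_mv: "(0::real^'n::finite^'m) *v x = 0"
  by (simp add: vec_eq_iff matrix_vector_mult_def)

lemma Uiso00_sub: "Uiso00 x0 R \<subseteq> Uiso x0 R"
proof
  fix v assume "v \<in> Uiso00 x0 R"
  then obtain a where a: "\<forall>g\<in>R. rot g *v v g = a" unfolding Uiso00_def by blast
  have "skew (0::real^'a^'a)" by (simp add: skew_def vec_eq_iff transpose_def)
  moreover have "\<forall>g\<in>R. rot g *v v g = a + 0 *v (eact g x0 - x0)" using a by (simp add: zero_mv)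
  ultimately show "v \<in> Uiso x0 R" unfolding Uiso_def by blast
qed

lemma distR_mono: "distR R v (Uiso x0 R) \<le> distR R v (Uiso00 x0 R)"
  unfolding distR_vals
proof (rule cInf_superset_mono[OF vals_ne vals_bdd])
  show "Uiso00 x0 R \<noteq> {}" using Uiso00_ne by blast
  show "vals R v (Uiso00 x0 R) \<subseteq> vals R v (Uiso x0 R)" using Uiso00_sub unfolding vals_def by blast
qed

lemma sqrt_avg:
  assumes "(K::real) \<ge> 0" "c \<ge> 0" "A \<le> K\<^sup>2 * B"
  shows "sqrt (c * A) \<le> K * sqrt (c * B)"
proof -
  have "c * A \<le> K\<^sup>2 * (c * B)" using mult_left_mono[OF assms(3) assms(2)] by (simp add: mult_ac)
  hence "sqrt (c * A) \<le> sqrt (K\<^sup>2 * (c * B))" by simp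
  also have "\<dots> = K * sqrt (c * B)" using assms(1) by (simp add: real_sqrt_mult)
  finally show ?thesis .
qed

lemma ineq_a: "normR x0 R C u \<le> normR00 x0 R C u"
proof -
  have "(\<Sum>g\<in>C. (distR R (\<lambda>h. u (emul g h)) (Uiso x0 R))\<^sup>2) \<le> (\<Sum>g\<in>C. (distR R (\<lambda>h. u (emul g h)) (Uiso00 x0 R))\<^sup>2)"
  proof (intro sum_mono power_mono distR_mono)
    fix g show "0 \<le> distR R (\<lambda>h. u (emul g h)) (Uiso x0 R)"
      using Uiso00_ne Uiso00_sub by (intro distR_nonneg) blast
  qed
  thus ?thesis unfolding normR_def normR00_def using sqrt_avg[of 1 "1 / real (card C)"] by simp
qed

lemma ineq_b:
  assumes sub: "euc_subgroup G" and RG: "R \<subseteq> G"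
  shows "normR00 x0 R C u \<le> gradR R C u"
proof -
  have "(distR R (\<lambda>h. u (emul g h)) (Uiso00 x0 R))\<^sup>2 \<le> (\<Sum>h\<in>R. (norm (u (emul g h) - transpose (rot h) *v u g))\<^sup>2)" for g
  proof -
    let ?w = "\<lambda>h. transpose (rot h) *v u g"
    have "?w \<in> Uiso00 x0 R" unfolding Uiso00_def
    proof (intro CollectI exI ballI)
      fix h assume "h \<in> R"
      hence "orth h" using RG sub_orth[OF sub] by blast
      hence "rot h ** transpose (rot h) = mat 1" using orthD(2) by (simp add: rot_def)
      thus "rot h *v ?w h = u g" by (metis matrix_vector_mul_assoc matrix_vector_mul_lid)
    qed
    hence "distR R (\<lambda>h. u (emul g h)) (Uiso00 x0 R) \<le> sqrt (\<Sum>h\<in>R. (norm (u (emul g h) - ?w h))\<^sup>2)"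
      by (rule distR_le)
    moreover have "0 \<le> distR R (\<lambda>h. u (emul g h)) (Uiso00 x0 R)" using Uiso00_ne by (intro distR_nonneg) blast
    ultimately have "(distR R (\<lambda>h. u (emul g h)) (Uiso00 x0 R))\<^sup>2 \<le> (sqrt (\<Sum>h\<in>R. (norm (u (emul g h) - ?w h))\<^sup>2))\<^sup>2"
      by (intro power_mono) auto
    also have "\<dots> = (\<Sum>h\<in>R. (norm (u (emul g h) - ?w h))\<^sup>2)" by (simp add: sum_nonneg)
    finally show ?thesis .
  qed
  hence "(\<Sum>g\<in>C. (distR R (\<lambda>h. u (emul g h)) (Uiso00 x0 R))\<^sup>2) \<le> (\<Sum>g\<in>C. \<Sum>h\<in>R. (norm (u (emul g h) - transpose (rot h) *v u g))\<^sup>2)"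
    by (intro sum_mono)
  thus ?thesis unfolding normR00_def gradR_def using sqrt_avg[of 1 "1 / real (card C)"] by simp
qed

lemma ineq_c:
  assumes sub: "euc_subgroup G" and RG: "R \<subseteq> G" and eidR: "eid \<in> R" and finR: "finite R"
  shows "gradR R C u \<le> sqrt (2 * (1 + real (card R))) * normR00 x0 R C u"
proof -
  define k where "k = 2 * (1 + real (card R))"
  have k0: "k > 0" by (simp add: k_def)
  have pt: "(\<Sum>h\<in>R. (norm (u (emul g h) - transpose (rot h) *v u g))\<^sup>2) \<le> k * (distR R (\<lambda>h. u (emul g h)) (Uiso00 x0 R))\<^sup>2" for g
  proof -
    let ?G = "\<Sum>h\<in>R. (norm (u (emul g h) - transpose (rot h) *v u g))\<^sup>2"
    have G0: "?G \<ge> 0" by (intro sum_nonneg) auto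
    have "sqrt (?G / k) \<le> distR R (\<lambda>h. u (emul g h)) (Uiso00 x0 R)"
    proof (rule distR_ge)
      show "Uiso00 x0 R \<noteq> {}" using Uiso00_ne by blast
      fix w assume "w \<in> Uiso00 x0 R"
      then obtain a where a: "\<And>h. h \<in> R \<Longrightarrow> rot h *v w h = a" unfolding Uiso00_def by blast
      let ?T = "\<Sum>h\<in>R. (norm (u (emul g h) - w h))\<^sup>2"
      have wa: "w h = transpose (rot h) *v a" if h: "h \<in> R" for h
      proof -
        have "orth h" using h RG sub_orth[OF sub] by blast
        hence "transpose (rot h) ** rot h = mat 1" using orthD(1) by (simp add: rot_def)
        hence "transpose (rot h) *v (rot h *v w h) = w h" by (metis matrix_vector_mul_assoc matrix_vector_mul_lid)
        thus ?thesis using a[OF h] by simp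
      qed
      have aeq: "norm (a - u g) \<le> sqrt ?T"
      proof -
        have "w eid = a" using wa[OF eidR] by (simp add: rot_def eid_def)
        hence "norm (a - u g) = norm (u (emul g eid) - w eid)" by (simp add: norm_minus_commute)
        also have "\<dots> \<le> sqrt ?T"
          by (intro real_le_rsqrt member_le_sum[of eid R "\<lambda>h. (norm (u (emul g h) - w h))\<^sup>2"]) (auto simp: eidR finR)
        finally show ?thesis .
      qed
      have "?G \<le> (\<Sum>h\<in>R. 2 * (norm (u (emul g h) - w h))\<^sup>2 + 2 * ?T)"
      proof (intro sum_mono)
        fix h assume h: "h \<in> R"
        have oh: "orth h" using h RG sub_orth[OF sub] by blast
        have "u (emul g h) - transpose (rot h) *v u g = (u (emul g h) - w h) + transpose (rot h) *v (a - u g)"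
          by (simp add: wa[OF h] matrix_vector_mult_diff_distrib)
        hence "norm (u (emul g h) - transpose (rot h) *v u g) \<le> norm (u (emul g h) - w h) + norm (a - u g)"
          using orth_norm[of "transpose (rot h)" "a - u g"] oh
          by (metis norm_triangle_ineq orth_def orthogonal_matrix_transpose rot_def)
        hence "(norm (u (emul g h) - transpose (rot h) *v u g))\<^sup>2 \<le> (norm (u (emul g h) - w h) + norm (a - u g))\<^sup>2"
          by (intro power_mono) auto
        also have "\<dots> \<le> 2 * (norm (u (emul g h) - w h))\<^sup>2 + 2 * (norm (a - u g))\<^sup>2" by (rule sq_sum_le)
        also have "(norm (a - u g))\<^sup>2 \<le> ?T"
          using power_mono[OF aeq, of 2] by (simp add: sum_nonneg)
        finally show "(norm (u (emul g h) - transpose (rot h) *v u g))\<^sup>2 \<le> 2 * (norm (u (emul g h) - w h))\<^sup>2 + 2 * ?T"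
          by simp
      qed
      also have "\<dots> = 2 * ?T + real (card R) * (2 * ?T)" by (simp add: sum.distrib sum_distrib_left)
      also have "\<dots> = k * ?T" by (simp add: k_def algebra_simps)
      finally have "?G / k \<le> ?T" using k0 by (simp add: divide_le_eq mult.commute)
      thus "sqrt (?G / k) \<le> sqrt ?T" by simp
    qed
    moreover have "0 \<le> sqrt (?G / k)" by (intro real_sqrt_ge_zero divide_nonneg_pos G0 k0)
    ultimately have "(sqrt (?G / k))\<^sup>2 \<le> (distR R (\<lambda>h. u (emul g h)) (Uiso00 x0 R))\<^sup>2"
      by (intro power_mono)
    hence "?G / k \<le> (distR R (\<lambda>h. u (emul g h)) (Uiso00 x0 R))\<^sup>2" using G0 k0 by (simp add: divide_nonneg_pos)
    thus ?thesis using k0 by (simp add: divide_le_eq mult.commute)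
  qed
  have "(\<Sum>g\<in>C. \<Sum>h\<in>R. (norm (u (emul g h) - transpose (rot h) *v u g))\<^sup>2) \<le> (\<Sum>g\<in>C. k * (distR R (\<lambda>h. u (emul g h)) (Uiso00 x0 R))\<^sup>2)"
    by (intro sum_mono pt)
  also have "\<dots> = (sqrt k)\<^sup>2 * (\<Sum>g\<in>C. (distR R (\<lambda>h. u (emul g h)) (Uiso00 x0 R))\<^sup>2)"
    using k0 by (simp add: sum_distrib_left)
  finally show ?thesis unfolding gradR_def normR00_def k_def[symmetric]
    using k0 by (intro sqrt_avg) auto
qed


lemma frame1:
  fixes Ac Ah :: "real^'n::finite^'n"
  assumes "orthogonal_matrix Ac" "orthogonal_matrix Ah"
  shows "norm ((Ac ** Ah) *v y - Ac *v x) = norm (y - transpose Ah *v x)"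
proof -
  have o: "orthogonal_matrix (Ac ** Ah)" using assms by (rule orthogonal_matrix_mul)
  have hh: "Ah ** transpose Ah = mat 1" using assms(2) by (simp add: orthogonal_matrix_def)
  have "(Ac ** Ah) *v (transpose Ah *v x) = Ac *v x"
    by (metis hh matrix_mul_assoc matrix_mul_rid matrix_vector_mul_assoc)
  hence "(Ac ** Ah) *v (y - transpose Ah *v x) = (Ac ** Ah) *v y - Ac *v x"
    by (simp add: matrix_vector_mult_diff_distrib)
  thus ?thesis using orth_norm[OF o, of "y - transpose Ah *v x"] by simp
qed

lemma frame2:
  fixes Ac Ah S :: "real^'n::finite^'n"
  assumes "orthogonal_matrix Ac" "orthogonal_matrix Ah" and w: "Ah *v w = a + S *v z"
  shows "norm ((Ac ** Ah) *v y - Ac *v a - (Ac ** S ** transpose Ac) *v (Ac *v z)) = norm (y - w)"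
proof -
  have o: "orthogonal_matrix (Ac ** Ah)" using assms by (intro orthogonal_matrix_mul)
  have cc: "transpose Ac ** Ac = mat 1" using assms(1) by (simp add: orthogonal_matrix_def)
  have e1: "(Ac ** S ** transpose Ac) *v (Ac *v z) = Ac *v (S *v z)"
    by (metis cc matrix_mul_assoc matrix_mul_rid matrix_vector_mul_assoc)
  have e2: "(Ac ** Ah) *v w = Ac *v a + Ac *v (S *v z)"
    by (metis w matrix_vector_mul_assoc matrix_vector_right_distrib)
  have "(Ac ** Ah) *v (y - w) = (Ac ** Ah) *v y - Ac *v a - (Ac ** S ** transpose Ac) *v (Ac *v z)"
    by (simp add: matrix_vector_mult_diff_distrib e1 e2)
  thus ?thesis using orth_norm[OF o, of "y - w"] by simp
qed

lemma mm_neg_r: "(A::real^'n::finite^'m) ** (- B) = - (A ** (B::real^'k^'n))"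
  by (simp add: vec_eq_iff matrix_matrix_mult_def sum_negf)
lemma mm_neg_l: "(- A::real^'n::finite^'m) ** B = - (A ** (B::real^'k^'n))"
  by (simp add: vec_eq_iff matrix_matrix_mult_def sum_negf)

lemma skew_conj: "skew S \<Longrightarrow> skew (A ** S ** transpose (A::real^'n::finite^'n))"
  by (simp add: skew_def matrix_transpose_mul matrix_mul_assoc mm_neg_l mm_neg_r)

lemma le_eps_c:
  fixes x y c :: real
  assumes c: "c \<ge> 0" and h: "\<And>e. e > 0 \<Longrightarrow> x \<le> y + c * e"
  shows "x \<le> y"
proof (rule field_le_epsilon)
  fix e :: real assume e: "e > 0"
  have "x \<le> y + c * (e / (c + 1))" using h[of "e / (c + 1)"] e c by simp
  also have "c * (e / (c + 1)) \<le> e" using c e by (simp add: field_simps)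
  finally show "x \<le> y + e" by simp
qed

context kornsetup
begin

lemma ineq_d:
  "\<exists>K\<ge>0. \<forall>N C u. N \<in> Mset G \<longrightarrow> coset_reps G N C \<longrightarrow> periodic G N u \<longrightarrow>
     gradR R C u \<le> K * normR x0 R C u"
proof -
  obtain Kg where Kg: "Kg \<ge> 0" "\<And>N C W a S. normal_subgroup (TN G N) G \<Longrightarrow> coset_reps G N C \<Longrightarrow> finite C \<Longrightarrow>
     cosets.per G N W \<Longrightarrow> cosets.per G N a \<Longrightarrow> cosets.per G N S \<Longrightarrow> (\<forall>g\<in>G. skew (S g)) \<Longrightarrow>
     (\<Sum>c\<in>C. \<Sum>h\<in>R. (norm (W (emul c h) - W c))\<^sup>2) \<le> Kg * (\<Sum>c\<in>C. Eloc R x0 W a S c)"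
    using global_korn by blast
  have "gradR R C u \<le> sqrt Kg * normR x0 R C u"
    if N: "N \<in> Mset G" and cr: "coset_reps G N C" and pu: "periodic G N u" for N C u
  proof (cases "finite C")
    case False thus ?thesis by (simp add: gradR_def normR_def)
  next
    case fC: True
    have nH: "normal_subgroup (TN G N) G" using N by (simp add: Mset_def)
    interpret cosets G N C using subG nH cr fC by unfold_locales
    let ?gr = "\<lambda>g. \<Sum>h\<in>R. (norm (u (emul g h) - transpose (rot h) *v u g))\<^sup>2"
    let ?d = "\<lambda>g. distR R (\<lambda>h. u (emul g h)) (Uiso x0 R)"
    have Une: "Uiso x0 R \<noteq> {}" using Uiso00_ne Uiso00_sub by blast
    have key: "(\<Sum>g\<in>C. ?gr g) \<le> Kg * (\<Sum>g\<in>C. (?d g)\<^sup>2) + (Kg * real (card C)) * e" if e: "e > 0" for e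
    proof -
      have "\<forall>c\<in>C. \<exists>w\<in>Uiso x0 R. (\<Sum>h\<in>R. (norm (u (emul c h) - w h))\<^sup>2) < (?d c)\<^sup>2 + e"
      proof
        fix c assume "c \<in> C"
        show "\<exists>w\<in>Uiso x0 R. (\<Sum>h\<in>R. (norm (u (emul c h) - w h))\<^sup>2) < (?d c)\<^sup>2 + e"
          by (rule distR_approx[OF Une e])
      qed
      hence "\<forall>c\<in>C. \<exists>w. w \<in> Uiso x0 R \<and> (\<Sum>h\<in>R. (norm (u (emul c h) - w h))\<^sup>2) < (?d c)\<^sup>2 + e"
        by blast
      then obtain wf where wf0: "\<forall>c\<in>C. wf c \<in> Uiso x0 R \<and> (\<Sum>h\<in>R. (norm (u (emul c h) - wf c h))\<^sup>2) < (?d c)\<^sup>2 + e"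
        by (rule bchoice[THEN exE]) blast
      hence wf: "\<And>c. c \<in> C \<Longrightarrow> wf c \<in> Uiso x0 R"
        "\<And>c. c \<in> C \<Longrightarrow> (\<Sum>h\<in>R. (norm (u (emul c h) - wf c h))\<^sup>2) < (?d c)\<^sup>2 + e"
        by blast+
      have "\<forall>c\<in>C. \<exists>a S. skew S \<and> (\<forall>h\<in>R. rot h *v wf c h = a + S *v (eact h x0 - x0))"
        using wf(1) unfolding Uiso_def by blast
      then obtain af where "\<forall>c\<in>C. \<exists>S. skew S \<and> (\<forall>h\<in>R. rot h *v wf c h = af c + S *v (eact h x0 - x0))"
        by (rule bchoice[THEN exE]) blast
      then obtain Sf where aS0: "\<forall>c\<in>C. skew (Sf c) \<and> (\<forall>h\<in>R. rot h *v wf c h = af c + Sf c *v (eact h x0 - x0))"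
        by (rule bchoice[THEN exE]) blast
      hence aS: "\<And>c. c \<in> C \<Longrightarrow> skew (Sf c)"
        "\<And>c h. c \<in> C \<Longrightarrow> h \<in> R \<Longrightarrow> rot h *v wf c h = af c + Sf c *v (eact h x0 - x0)"
        by blast+
      define W where "W g = fst g *v u g" for g
      define \<alpha>0 where "\<alpha>0 c = fst c *v af c" for c
      define \<Sigma>0 where "\<Sigma>0 c = fst c ** Sf c ** transpose (fst c)" for c
      define \<alpha> where "\<alpha> g = \<alpha>0 (rep g)" for g
      define \<Sigma> where "\<Sigma> g = \<Sigma>0 (rep g)" for g
      have pW: "per W" using pu unfolding per_def periodic_def W_def by (simp add: TN_fst)
      have pa: "per \<alpha>" unfolding \<alpha>_def by (rule per_comp_rep)
      have pS: "per \<Sigma>" unfolding \<Sigma>_def by (rule per_comp_rep)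
      have sk: "\<forall>g\<in>G. skew (\<Sigma> g)" unfolding \<Sigma>_def \<Sigma>0_def using rep aS(1) skew_conj by blast
      have GK: "(\<Sum>c\<in>C. \<Sum>h\<in>R. (norm (W (emul c h) - W c))\<^sup>2) \<le> Kg * (\<Sum>c\<in>C. Eloc R x0 W \<alpha> \<Sigma> c)"
        using Kg(2)[OF nH cr fC pW pa pS sk] .
      have gr_eq: "?gr c = (\<Sum>h\<in>R. (norm (W (emul c h) - W c))\<^sup>2)" if c: "c \<in> C" for c
      proof (intro sum.cong refl)
        fix h assume h: "h \<in> R"
        have oc: "orthogonal_matrix (fst c)" using G_orth[of c] c CG unfolding orth_def by blast
        have oh: "orthogonal_matrix (fst h)" using G_orth[of h] h RG unfolding orth_def by blast
        show "(norm (u (emul c h) - transpose (rot h) *v u c))\<^sup>2 = (norm (W (emul c h) - W c))\<^sup>2"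
          using frame1[OF oc oh, of "u (emul c h)" "u c"] by (simp add: W_def rot_def)
      qed
      have E_eq: "Eloc R x0 W \<alpha> \<Sigma> c = (\<Sum>h\<in>R. (norm (u (emul c h) - wf c h))\<^sup>2)" if c: "c \<in> C" for c
        unfolding Eloc_def
      proof (intro sum.cong refl)
        fix h assume h: "h \<in> R"
        have oc: "orthogonal_matrix (fst c)" using G_orth[of c] c CG unfolding orth_def by blast
        have oh: "orthogonal_matrix (fst h)" using G_orth[of h] h RG unfolding orth_def by blast
        have rc: "rep c = c" by (rule rep_C[OF c])
        have "norm (resid x0 W \<alpha> \<Sigma> c h) = norm (u (emul c h) - wf c h)"
          unfolding resid_def W_def \<alpha>_def \<Sigma>_def rc \<alpha>0_def \<Sigma>0_def
          using frame2[OF oc oh, of "wf c h" "af c" "Sf c" "eact h x0 - x0" "u (emul c h)"] aS(2)[OF c h]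
          by (simp add: rot_def eact_emul eact_diff)
        thus "(norm (resid x0 W \<alpha> \<Sigma> c h))\<^sup>2 = (norm (u (emul c h) - wf c h))\<^sup>2" by simp
      qed
      have "(\<Sum>g\<in>C. ?gr g) = (\<Sum>c\<in>C. \<Sum>h\<in>R. (norm (W (emul c h) - W c))\<^sup>2)"
        by (intro sum.cong refl gr_eq)
      also have "\<dots> \<le> Kg * (\<Sum>c\<in>C. Eloc R x0 W \<alpha> \<Sigma> c)" by (rule GK)
      also have "(\<Sum>c\<in>C. Eloc R x0 W \<alpha> \<Sigma> c) \<le> (\<Sum>c\<in>C. (?d c)\<^sup>2 + e)"
        using E_eq wf(2) by (intro sum_mono) (simp add: less_imp_le)
      hence "Kg * (\<Sum>c\<in>C. Eloc R x0 W \<alpha> \<Sigma> c) \<le> Kg * (\<Sum>c\<in>C. (?d c)\<^sup>2 + e)"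
        using Kg(1) by (simp add: mult_left_mono)
      also have "\<dots> = Kg * (\<Sum>g\<in>C. (?d g)\<^sup>2) + (Kg * real (card C)) * e"
        by (simp add: sum.distrib algebra_simps)
      finally show ?thesis .
    qed
    have "(\<Sum>g\<in>C. ?gr g) \<le> Kg * (\<Sum>g\<in>C. (?d g)\<^sup>2)"
      by (rule le_eps_c[of "Kg * real (card C)"]) (use Kg(1) key in auto)
    thus ?thesis unfolding gradR_def normR_def
      by (intro sqrt_avg) (use Kg(1) in auto)
  qed
  thus ?thesis using Kg(1) by (intro exI[of _ "sqrt Kg"]) auto
qed

end


lemma norms_nonneg: "0 \<le> normR x0 R C u" "0 \<le> normR00 x0 R C u" "0 \<le> gradR R C u"
  unfolding normR_def normR00_def gradR_def
  by (intro real_sqrt_ge_zero mult_nonneg_nonneg sum_nonneg; simp)+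

lemma norms_inf: "infinite C \<Longrightarrow> normR x0 R C u = 0 \<and> normR00 x0 R C u = 0 \<and> gradR R C u = 0"
  by (simp add: normR_def normR00_def gradR_def)

lemma rot_finite_of_C:
  assumes sub: "euc_subgroup G" and cr: "coset_reps G N C" and nH: "normal_subgroup (TN G N) G" and fC: "finite C"
  shows "finite (fst ` G)"
proof -
  have "fst ` G \<subseteq> fst ` C"
  proof
    fix A assume "A \<in> fst ` G"
    then obtain g where g: "g \<in> G" "A = fst g" by blast
    then obtain c where c: "c \<in> C" "emul (einv c) g \<in> TN G N" using cr unfolding coset_reps_def by blast
    have cG: "c \<in> G" using c(1) cr unfolding coset_reps_def by blast
    have oc: "orth c" using sub_orth[OF sub cG] .
    have "g = emul c (emul (einv c) g)" using oc by simp
    hence "fst g = fst c ** fst (emul (einv c) g)" by (metis fst_emul)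
    also have "fst (emul (einv c) g) = mat 1" using c(2) by (rule TN_fst)
    finally show "A \<in> fst ` C" using g(2) c(1) by simp
  qed
  thus ?thesis using fC finite_subset by blast
qed

theorem corollary4p7:
  fixes G :: "'n::finite euc set" and R :: "'n euc set" and x0 :: "real^'n"
  assumes "space_group G"
    and "inj_on (\<lambda>g. eact g x0) G"
    and "property2 G x0 R"
  shows "\<exists>K>0. \<forall>N\<in>Mset G. \<forall>C u. coset_reps G N C \<and> periodic G N u \<longrightarrow>
           normR x0 R C u \<le> K * normR00 x0 R C u \<and>
           normR x0 R C u \<le> K * gradR R C u \<and>
           normR00 x0 R C u \<le> K * normR x0 R C u \<and>
           normR00 x0 R C u \<le> K * gradR R C u \<and>
           gradR R C u \<le> K * normR x0 R C u \<and>
           gradR R C u \<le> K * normR00 x0 R C u"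
proof -
  have sub: "euc_subgroup G" using assms(1) by (simp add: space_group_def)
  obtain B where B: "B \<subseteq> {b. (mat 1, b) \<in> G}" "independent B" "card B = CARD('n)"
    using assms(1) unfolding space_group_def by blast
  have finB: "finite B" using B(2) indep_card_eq_dim_span by blast
  have "UNIV \<subseteq> span B"
    using card_ge_dim_independent[of B UNIV] B by (simp add: dim_UNIV)
  hence spanB: "span B = UNIV" by (rule top.extremum_uniqueI)
  have trB: "tr b \<in> G" if "b \<in> B" for b using B(1) that by (auto simp: tr_def)
  have RG: "R \<subseteq> G" and finR: "finite R" using assms(3) by (auto simp: property2_def)
  obtain R' R'' where RR: "R' \<subseteq> G" "eid \<in> R'" "generated R' = G" "property1 G x0 R''"
      "{emul g h | g h. g \<in> R' \<and> h \<in> R''} \<subseteq> R"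
    using assms(3) unfolding property2_def by blast
  have R''G: "R'' \<subseteq> G" and finR'': "finite R''" and eidR'': "eid \<in> R''"
    and aff: "affine hull ((\<lambda>g. eact g x0) ` R'') = affine hull ((\<lambda>g. eact g x0) ` G)"
    using RR(4) by (auto simp: property1_def)
  have prodR: "emul g h \<in> R" if "g \<in> R'" "h \<in> R''" for g h using RR(5) that by blast
  have eidR: "eid \<in> R" using prodR[OF RR(2) eidR''] by simp
  let ?Z = "(\<lambda>h. eact h x0 - x0) ` R''"
  have spanZ: "span ?Z = UNIV"
  proof -
    have x0in: "x0 \<in> (\<lambda>g. eact g x0) ` R''" using eidR'' by (force simp: eact_def eid_def)
    have "B \<subseteq> span ?Z"
    proof
      fix b assume b: "b \<in> B"
      have "x0 + b \<in> (\<lambda>g. eact g x0) ` G"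
        using trB[OF b] by (force simp: eact_def tr_def add.commute)
      hence "x0 + b \<in> affine hull ((\<lambda>g. eact g x0) ` R'')" unfolding aff by (rule hull_inc)
      then obtain v where v: "v \<in> span ((\<lambda>x. - x0 + x) ` ((\<lambda>g. eact g x0) ` R'' - {x0}))" "x0 + b = x0 + v"
        unfolding affine_hull_span2[OF x0in] by blast
      have "(\<lambda>x. - x0 + x) ` ((\<lambda>g. eact g x0) ` R'' - {x0}) \<subseteq> ?Z" by auto
      hence "v \<in> span ?Z" using v(1) span_mono by blast
      thus "b \<in> span ?Z" using v(2) by simp
    qed
    hence "span B \<subseteq> span ?Z" by (simp add: span_minimal)
    thus ?thesis using spanB by auto
  qed
  show ?thesis
  proof (cases "finite (fst ` G)")
    case False
    have "normR x0 R C u \<le> 1 * normR00 x0 R C u \<and>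
           normR x0 R C u \<le> 1 * gradR R C u \<and>
           normR00 x0 R C u \<le> 1 * normR x0 R C u \<and>
           normR00 x0 R C u \<le> 1 * gradR R C u \<and>
           gradR R C u \<le> 1 * normR x0 R C u \<and>
           gradR R C u \<le> 1 * normR00 x0 R C u"
      if N: "N \<in> Mset G" and cr: "coset_reps G N C" for N C u
    proof -
      have nH: "normal_subgroup (TN G N) G" using N by (simp add: Mset_def)
      have "infinite C" using rot_finite_of_C[OF sub cr nH] False by blast
      thus ?thesis using norms_inf[of C x0 R u] by simp
    qed
    thus ?thesis by (intro exI[of _ 1]) auto
  next
    case True
    interpret kornsetup G R R' R'' x0 B
      by unfold_locales (use sub RR(1,2,3) R''G eidR'' finR'' finR prodR spanZ finB spanB trB True RG in auto)
    obtain Kd where Kd: "Kd \<ge> 0" "\<And>N C u. N \<in> Mset G \<Longrightarrow> coset_reps G N C \<Longrightarrow> periodic G N u \<Longrightarrow>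
        gradR R C u \<le> Kd * normR x0 R C u"
      using ineq_d by blast
    define Kc where "Kc = sqrt (2 * (1 + real (card R)))"
    define K where "K = max 1 (max Kc Kd)"
    have K1: "K \<ge> 1" and KKc: "Kc \<le> K" and KKd: "Kd \<le> K" by (auto simp: K_def)
    have "normR x0 R C u \<le> K * normR00 x0 R C u \<and>
           normR x0 R C u \<le> K * gradR R C u \<and>
           normR00 x0 R C u \<le> K * normR x0 R C u \<and>
           normR00 x0 R C u \<le> K * gradR R C u \<and>
           gradR R C u \<le> K * normR x0 R C u \<and>
           gradR R C u \<le> K * normR00 x0 R C u"
      if N: "N \<in> Mset G" and cr: "coset_reps G N C" and pu: "periodic G N u" for N C u
    proof -
      let ?a = "normR x0 R C u" and ?b = "normR00 x0 R C u" and ?g = "gradR R C u"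
      have a0: "?a \<ge> 0" and b0: "?b \<ge> 0" and g0: "?g \<ge> 0" by (rule norms_nonneg)+
      have ia: "?a \<le> ?b" by (rule ineq_a)
      have ib: "?b \<le> ?g" by (rule ineq_b[OF sub RG])
      have ic: "?g \<le> Kc * ?b" unfolding Kc_def by (rule ineq_c[OF sub RG eidR finR])
      have id: "?g \<le> Kd * ?a" by (rule Kd(2)[OF N cr pu])
      have m1: "x \<le> K * x" if "x \<ge> 0" for x using K1 that by (simp add: mult_le_cancel_right1)
      have m2: "Kc * ?b \<le> K * ?b" using KKc b0 by (rule mult_right_mono)
      have m3: "Kd * ?a \<le> K * ?a" using KKd a0 by (rule mult_right_mono)
      show ?thesis using ia ib ic id m1[OF a0] m1[OF b0] m1[OF g0] m2 m3 by linarith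
    qed
    thus ?thesis using K1 by (intro exI[of _ K]) auto
  qed
qed


end
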